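(* Let $n\ge3$, $k\ge0$, and let $\{v_s\}_{s\in I}$ be a basis of $V$. For a multi-index $\mathbf{j}=(j_1,\dots,j_{n-2},j_{n-1})$ of non-negative integers with $j_1+\dots+j_{n-2}\le k$ and $j_{n-1}=k-\sum_{i=1}^{n-2}j_i$, and $s\in I$, define $$\Psi^s_{\mathbf{j}}=\mathbf{CK}^{\mu_n}_{x_n}\Big[\underline{x}_{[n-1]}^{j_{n-1}}\mathbf{CK}^{\mu_{n-1}}_{x_{n-1}}\Big[\underline{x}_{[n-2]}^{j_{n-2}}\cdots\mathbf{CK}^{\mu_3}_{x_3}\big[\underline{x}_{[2]}^{j_2}\,\mathbf{CK}^{\mu_2}_{x_2}[x_1^{j_1}]\big]\cdots\Big]\Big]v_s .$$ Then the family $\{\Psi^s_{\mathbf{j}}\}$, over all such $\mathbf{j}$ and all $s\in I$, is a basis of $\mathcal{M}_k(\mathbb{R}^n;V)$.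
   Context: Fix $n\ge1$ and real parameters $\mu_1,\dots,\mu_n>0$; write $[\ell]=\{1,\dots,\ell\}$. For $i$, $r_i$ is the reflection $(r_if)(x)=f(x_1,\dots,-x_i,\dots,x_n)$ and $T_i=\partial_{x_i}+\frac{\mu_i}{x_i}(1-r_i)$. $\mathcal{C}\ell_n$ is generated by $e_1,\dots,e_n$ with $e_ie_j+e_je_i=-2\delta_{ij}$, $V$ is a fixed finite-dimensional left $\mathcal{C}\ell_n$-module, and operators act on $V$-valued (or $\mathcal{C}\ell_n$-valued) polynomials with $x_i,T_i,r_i$ acting on the polynomial factor and $e_i$ by left multiplication. $\underline{D}_{[\ell]}=\sum_{i\le\ell}e_iT_i$, $\underline{x}_{[\ell]}=\sum_{i\le\ell}e_ix_i$, $\underline{D}=\underline{D}_{[n]}$; $\mathcal{M}_k(\mathbb{R}^n;V)=\ker\underline{D}\cap(\mathcal{P}_k(\mathbb{R}^n)\otimes V)$ with $\mathcal{P}_k$ the homogeneous polynomials of degree $k$. For $2\le j\le n$ the Cauchy--Kovalevskaia extension operator acting on polynomials in $x_1,\dots,x_{j-1}$ (valued in $\mathcal{C}\ell_n$ or $V$) is $$\mathbf{CK}^{\mu_j}_{x_j}=\Gamma(\mu_j+\tfrac12)\Big[\widetilde I_{\mu_j-1/2}(x_j\underline{D}_{[j-1]})+\tfrac12 e_jx_j\underline{D}_{[j-1]}\,\widetilde I_{\mu_j+1/2}(x_j\underline{D}_{[j-1]})\Big],\qquad \widetilde I_\alpha(z)=\sum_{m\ge0}\frac{(z/2)^{2m}}{m!\,\Gamma(m+\alpha+1)},$$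 where $x_j$ commutes with $\underline{D}_{[j-1]}$ and the series terminate on polynomials. *)

theory Defs
  imports "HOL-Analysis.Analysis" "HOL-Library.Function_Algebras"
begin

text \<open>V-valued polynomials in the variables x_1,...,x_n are represented by their
coefficient functions: a polynomial p maps each exponent vector alpha (alpha i = exponent
of x_i, variables indexed from 1) to its coefficient in V.\<close>

type_synonym 'v vpoly = "(nat \<Rightarrow> nat) \<Rightarrow> 'v"

definition pscale :: "real \<Rightarrow> 'v::real_vector vpoly \<Rightarrow> 'v vpoly" where
  "pscale c p = (\<lambda>\<beta>. c *\<^sub>R p \<beta>)"

definition is_poly :: "nat \<Rightarrow> 'v::zero vpoly \<Rightarrow> bool" where
  "is_poly n p \<longleftrightarrow> finite {\<alpha>. p \<alpha> \<noteq> 0} \<and> (\<forall>\<alpha>. p \<alpha> \<noteq> 0 \<longrightarrow> (\<forall>i. i \<notin> {1..n} \<longrightarrow> \<alpha> i = 0))"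

definition homog :: "nat \<Rightarrow> nat \<Rightarrow> 'v::zero vpoly \<Rightarrow> bool" where
  "homog n k p \<longleftrightarrow> is_poly n p \<and> (\<forall>\<alpha>. p \<alpha> \<noteq> 0 \<longrightarrow> (\<Sum>i=1..n. \<alpha> i) = k)"

text \<open>total degree (bound used to truncate the terminating CK series)\<close>
definition tdeg :: "nat \<Rightarrow> 'v::zero vpoly \<Rightarrow> nat" where
  "tdeg n p = Max (insert 0 ((\<lambda>\<alpha>. \<Sum>i=1..n. \<alpha> i) ` {\<alpha>. p \<alpha> \<noteq> 0}))"

definition mono :: "(nat \<Rightarrow> nat) \<Rightarrow> 'v::zero \<Rightarrow> 'v vpoly" where
  "mono \<alpha> v = (\<lambda>\<beta>. if \<beta> = \<alpha> then v else 0)"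

definition mulx :: "nat \<Rightarrow> 'v::zero vpoly \<Rightarrow> 'v vpoly" where
  "mulx i p = (\<lambda>\<beta>. if 1 \<le> \<beta> i then p (\<beta>(i := \<beta> i - 1)) else 0)"

definition pder :: "nat \<Rightarrow> 'v::real_vector vpoly \<Rightarrow> 'v vpoly" where
  "pder i p = (\<lambda>\<beta>. real (\<beta> i + 1) *\<^sub>R p (\<beta>(i := \<beta> i + 1)))"

definition refl :: "nat \<Rightarrow> 'v::real_vector vpoly \<Rightarrow> 'v vpoly" where
  "refl i p = (\<lambda>\<beta>. ((-1::real) ^ \<beta> i) *\<^sub>R p \<beta>)"

text \<open>division by x_i (exact quotient of a polynomial divisible by x_i)\<close>
definition divx :: "nat \<Rightarrow> 'v vpoly \<Rightarrow> 'v vpoly" where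
  "divx i p = (\<lambda>\<beta>. p (\<beta>(i := \<beta> i + 1)))"

definition dunkl :: "(nat \<Rightarrow> real) \<Rightarrow> nat \<Rightarrow> 'v::real_vector vpoly \<Rightarrow> 'v vpoly" where
  "dunkl \<mu> i p = (\<lambda>\<beta>. pder i p \<beta> + \<mu> i *\<^sub>R divx i (\<lambda>\<gamma>. p \<gamma> - refl i p \<gamma>) \<beta>)"

definition dirac :: "(nat \<Rightarrow> real) \<Rightarrow> (nat \<Rightarrow> 'v \<Rightarrow> 'v) \<Rightarrow> nat \<Rightarrow> 'v::real_vector vpoly \<Rightarrow> 'v vpoly" where
  "dirac \<mu> E l p = (\<lambda>\<beta>. \<Sum>i=1..l. E i (dunkl \<mu> i p \<beta>))"

definition xvec :: "(nat \<Rightarrow> 'v \<Rightarrow> 'v) \<Rightarrow> nat \<Rightarrow> 'v::real_vector vpoly \<Rightarrow> 'v vpoly" where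
  "xvec E l p = (\<lambda>\<beta>. \<Sum>i=1..l. E i (mulx i p \<beta>))"

text \<open>Cauchy-Kovalevskaia extension CK^{mu_j}_{x_j}; the series in m terminates on
polynomials, and all terms with m > tdeg vanish, so it is summed up to tdeg.
(z/2)^{2m} with z = x_j D_[j-1] gives (x_j D_[j-1])^{2m} / 4^m.\<close>
definition CK :: "(nat \<Rightarrow> real) \<Rightarrow> (nat \<Rightarrow> 'v \<Rightarrow> 'v) \<Rightarrow> nat \<Rightarrow> nat \<Rightarrow> 'v::real_vector vpoly \<Rightarrow> 'v vpoly" where
  "CK \<mu> E n j p = (\<lambda>\<beta>. Gamma (\<mu> j + 1/2) *\<^sub>R
     (\<Sum>m\<le>tdeg n p.
        (1 / (4 ^ m * fact m * Gamma (real m + \<mu> j + 1/2))) *\<^sub>R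
           (((\<lambda>q. mulx j (dirac \<mu> E (j - 1) q)) ^^ (2 * m)) p \<beta>)
      + (1/2 * (1 / (4 ^ m * fact m * Gamma (real m + \<mu> j + 3/2)))) *\<^sub>R
           E j ((((\<lambda>q. mulx j (dirac \<mu> E (j - 1) q)) ^^ (2 * m + 1)) p \<beta>))))"

fun chain :: "(nat \<Rightarrow> real) \<Rightarrow> (nat \<Rightarrow> 'v \<Rightarrow> 'v) \<Rightarrow> nat \<Rightarrow> (nat \<Rightarrow> nat) \<Rightarrow> 'v::real_vector \<Rightarrow> nat \<Rightarrow> 'v vpoly" where
  "chain \<mu> E n jj v 0 = mono (\<lambda>_. 0) v"
| "chain \<mu> E n jj v (Suc 0) = mono ((\<lambda>_. 0)(1 := jj 1)) v"
| "chain \<mu> E n jj v (Suc (Suc l)) =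
     (xvec E (Suc (Suc l)) ^^ jj (Suc (Suc l))) (CK \<mu> E n (Suc (Suc l)) (chain \<mu> E n jj v (Suc l)))"

definition Psi :: "(nat \<Rightarrow> real) \<Rightarrow> (nat \<Rightarrow> 'v \<Rightarrow> 'v) \<Rightarrow> nat \<Rightarrow> nat \<Rightarrow> (nat \<Rightarrow> nat) \<Rightarrow> 'v::real_vector \<Rightarrow> 'v vpoly" where
  "Psi \<mu> E n k jj v =
     CK \<mu> E n n (chain \<mu> E n (jj(n - 1 := k - (\<Sum>i=1..n-2. jj i))) v (n - 1))"

definition mindex :: "nat \<Rightarrow> nat \<Rightarrow> (nat \<Rightarrow> nat) set" where
  "mindex n k = {jj. (\<forall>i. i \<notin> {1..n-2} \<longrightarrow> jj i = 0) \<and> (\<Sum>i=1..n-2. jj i) \<le> k}"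

definition monogenic :: "(nat \<Rightarrow> real) \<Rightarrow> (nat \<Rightarrow> 'v \<Rightarrow> 'v) \<Rightarrow> nat \<Rightarrow> nat \<Rightarrow> 'v::real_vector vpoly set" where
  "monogenic \<mu> E n k = {p. homog n k p \<and> dirac \<mu> E n p = (\<lambda>_. 0)}"

definition is_basis_fam :: "'v::real_vector vpoly set \<Rightarrow> ('i \<Rightarrow> 'v vpoly) \<Rightarrow> 'i set \<Rightarrow> bool" where
  "is_basis_fam S F A \<longleftrightarrow> inj_on F A \<and> \<not> module.dependent pscale (F ` A)
      \<and> module.span pscale (F ` A) = S"

text \<open>V is a left Cl_n-module: e_i acts by the linear map E i, e_i e_j + e_j e_i = -2 delta_ij.\<close>
definition clifford_module :: "nat \<Rightarrow> (nat \<Rightarrow> 'v::real_vector \<Rightarrow> 'v) \<Rightarrow> bool" where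
  "clifford_module n E \<longleftrightarrow> (\<forall>i\<in>{1..n}. linear (E i)) \<and>
     (\<forall>i\<in>{1..n}. \<forall>j\<in>{1..n}. \<forall>v. E i (E j v) + E j (E i v) = (if i = j then -2 *\<^sub>R v else 0))"

end

theory Submission
  imports Defs
begin


instantiation "fun" :: (type, real_vector) real_vector
begin
definition scaleR_fun :: "real \<Rightarrow> ('a \<Rightarrow> 'b) \<Rightarrow> 'a \<Rightarrow> 'b" where
  "scaleR_fun r f = (\<lambda>x. r *\<^sub>R f x)"
instance
  by standard (auto simp: scaleR_fun_def fun_eq_iff scaleR_add_right scaleR_add_left)
end

lemma scaleR_fun_apply[simp]: "(r *\<^sub>R f) x = r *\<^sub>R f x"
  by (simp add: scaleR_fun_def)

lemma pscale_eq: "pscale = scaleR"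
  by (simp add: pscale_def fun_eq_iff)



definition kap :: "(nat \<Rightarrow> real) \<Rightarrow> nat \<Rightarrow> nat \<Rightarrow> real" where
  "kap \<mu> i a = real (a+1) + \<mu> i * (1 - (-1)^(a+1))"

lemma dunkl_eq: "dunkl \<mu> i p \<beta> = kap \<mu> i (\<beta> i) *\<^sub>R p (\<beta>(i := \<beta> i + 1))"
  by (simp add: dunkl_def pder_def divx_def refl_def kap_def algebra_simps)

lemma mulx_eq: "mulx i p \<beta> = (if 1 \<le> \<beta> i then p (\<beta>(i := \<beta> i - 1)) else 0)"
  by (simp add: mulx_def)

definition em :: "(nat \<Rightarrow> 'v \<Rightarrow> 'v) \<Rightarrow> nat \<Rightarrow> 'v vpoly \<Rightarrow> 'v vpoly" where
  "em E j q = (\<lambda>\<beta>. E j (q \<beta>))"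

lemma linear_mulx: "linear (mulx i)"
  by (rule linearI) (auto simp: mulx_def fun_eq_iff)

lemma linear_dunkl: "linear (dunkl \<mu> i)"
  by (rule linearI) (auto simp: dunkl_eq fun_eq_iff algebra_simps)

lemma linear_pow: "linear (f::'a::real_vector \<Rightarrow> 'a) \<Longrightarrow> linear (f ^^ r)"
proof (induction r)
  case 0 show ?case using linear_id by (simp add: id_def)
next
  case (Suc r) thus ?case using linear_compose[OF Suc.IH Suc.prems] by (simp add: o_def)
qed

lemma kap_pos: "\<mu> i \<ge> 0 \<Longrightarrow> kap \<mu> i a > 0"
proof -
  assume "\<mu> i \<ge> 0"
  moreover have "1 - (-1::real)^(a+1) \<ge> 0"
    by (cases "even (a+1)") auto
  ultimately have "\<mu> i * (1 - (-1::real)^(a+1)) \<ge> 0" by (rule mult_nonneg_nonneg)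
  then show ?thesis unfolding kap_def by linarith
qed

locale dk =
  fixes n :: nat and \<mu> :: "nat \<Rightarrow> real" and E :: "nat \<Rightarrow> 'v::real_vector \<Rightarrow> 'v"
  assumes mu_pos: "\<forall>i\<in>{1..n}. \<mu> i > 0" and clif: "clifford_module n E"
begin

lemma E_lin: "i \<in> {1..n} \<Longrightarrow> linear (E i)"
  using clif by (simp add: clifford_module_def)

lemma E_add: "i \<in> {1..n} \<Longrightarrow> E i (x + y) = E i x + E i y"
  using E_lin linear_add by blast
lemma E_scale: "i \<in> {1..n} \<Longrightarrow> E i (c *\<^sub>R x) = c *\<^sub>R E i x"
  using E_lin linear_scale by blast
lemma E_zero: "i \<in> {1..n} \<Longrightarrow> E i 0 = 0"
  using E_lin linear_0 by blast
lemma E_neg: "i \<in> {1..n} \<Longrightarrow> E i (- x) = - E i x"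
  using E_lin linear_neg by blast
lemma E_diff: "i \<in> {1..n} \<Longrightarrow> E i (x - y) = E i x - E i y"
  using E_lin linear_diff by blast
lemma E_sum: "i \<in> {1..n} \<Longrightarrow> E i (sum f A) = (\<Sum>a\<in>A. E i (f a))"
  using E_lin linear_sum by blast

lemma E_sq: "i \<in> {1..n} \<Longrightarrow> E i (E i v) = - v"
proof -
  assume i: "i \<in> {1..n}"
  have "E i (E i v) + E i (E i v) = -2 *\<^sub>R v" using clif i by (simp add: clifford_module_def)
  then have "2 *\<^sub>R E i (E i v) = 2 *\<^sub>R (- v)" by (simp add: scaleR_2)
  then show ?thesis using scaleR_cancel_left[of 2 "E i (E i v)" "-v"] by simp
qed

lemma E_anti: "i \<in> {1..n} \<Longrightarrow> j \<in> {1..n} \<Longrightarrow> i \<noteq> j \<Longrightarrow> E i (E j v) = - E j (E i v)"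
proof -
  assume "i \<in> {1..n}" "j \<in> {1..n}" "i \<noteq> j"
  then have "E i (E j v) + E j (E i v) = 0" using clif by (simp add: clifford_module_def)
  then show ?thesis by (simp add: eq_neg_iff_add_eq_0)
qed

lemma mu_nonneg: "i \<in> {1..n} \<Longrightarrow> \<mu> i \<ge> 0"
  using mu_pos by fastforce

lemma linear_em: "j \<in> {1..n} \<Longrightarrow> linear (em E j)"
  by (rule linearI) (auto simp: em_def fun_eq_iff E_add E_scale)

lemma dunkl_add: "dunkl \<mu> i (p + q) \<beta> = dunkl \<mu> i p \<beta> + dunkl \<mu> i q \<beta>"
  by (simp add: dunkl_eq scaleR_add_right)
lemma dunkl_scale: "dunkl \<mu> i (c *\<^sub>R p) \<beta> = c *\<^sub>R dunkl \<mu> i p \<beta>"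
  by (simp add: dunkl_eq)
lemma mulx_add: "mulx i (p + q::'v::real_vector vpoly) \<beta> = mulx i p \<beta> + mulx i q \<beta>"
  by (simp add: mulx_eq)
lemma mulx_scale: "mulx i (c *\<^sub>R p::'v::real_vector vpoly) \<beta> = c *\<^sub>R mulx i p \<beta>"
  by (simp add: mulx_eq)

lemma linear_dirac: "l \<le> n \<Longrightarrow> linear (dirac \<mu> E l)"
proof (rule linearI)
  assume l: "l \<le> n"
  fix p q :: "'v vpoly" and c :: real
  show "dirac \<mu> E l (p + q) = dirac \<mu> E l p + dirac \<mu> E l q"
  proof
    fix \<beta>
    have "dirac \<mu> E l (p + q) \<beta> = (\<Sum>i=1..l. E i (dunkl \<mu> i p \<beta>) + E i (dunkl \<mu> i q \<beta>))"
      unfolding dirac_def dunkl_add using l by (intro sum.cong refl E_add) auto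
    then show "dirac \<mu> E l (p + q) \<beta> = (dirac \<mu> E l p + dirac \<mu> E l q) \<beta>"
      by (simp add: dirac_def sum.distrib)
  qed
  show "dirac \<mu> E l (c *\<^sub>R p) = c *\<^sub>R dirac \<mu> E l p"
  proof
    fix \<beta>
    have "dirac \<mu> E l (c *\<^sub>R p) \<beta> = (\<Sum>i=1..l. c *\<^sub>R E i (dunkl \<mu> i p \<beta>))"
      unfolding dirac_def dunkl_scale using l by (intro sum.cong refl E_scale) auto
    then show "dirac \<mu> E l (c *\<^sub>R p) \<beta> = (c *\<^sub>R dirac \<mu> E l p) \<beta>"
      by (simp add: dirac_def scaleR_sum_right)
  qed
qed

lemma linear_xvec: "l \<le> n \<Longrightarrow> linear (xvec E l)"
proof (rule linearI)
  assume l: "l \<le> n"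
  fix p q :: "'v vpoly" and c :: real
  show "xvec E l (p + q) = xvec E l p + xvec E l q"
  proof
    fix \<beta>
    have "xvec E l (p + q) \<beta> = (\<Sum>i=1..l. E i (mulx i p \<beta>) + E i (mulx i q \<beta>))"
      unfolding xvec_def mulx_add using l by (intro sum.cong refl E_add) auto
    then show "xvec E l (p + q) \<beta> = (xvec E l p + xvec E l q) \<beta>"
      by (simp add: xvec_def sum.distrib)
  qed
  show "xvec E l (c *\<^sub>R p) = c *\<^sub>R xvec E l p"
  proof
    fix \<beta>
    have "xvec E l (c *\<^sub>R p) \<beta> = (\<Sum>i=1..l. c *\<^sub>R E i (mulx i p \<beta>))"
      unfolding xvec_def mulx_scale using l by (intro sum.cong refl E_scale) auto
    then show "xvec E l (c *\<^sub>R p) \<beta> = (c *\<^sub>R xvec E l p) \<beta>"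
      by (simp add: xvec_def scaleR_sum_right)
  qed
qed

end


definition sat :: "((nat \<Rightarrow> nat) \<Rightarrow> bool) \<Rightarrow> 'v::zero vpoly \<Rightarrow> bool" where
  "sat \<Phi> q \<longleftrightarrow> (\<forall>\<beta>. q \<beta> \<noteq> 0 \<longrightarrow> \<Phi> \<beta>)"

definition fin :: "'v::zero vpoly \<Rightarrow> bool" where
  "fin q \<longleftrightarrow> finite {\<beta>. q \<beta> \<noteq> 0}"

definition suppin :: "nat set \<Rightarrow> (nat \<Rightarrow> nat) \<Rightarrow> bool" where
  "suppin S \<beta> \<longleftrightarrow> (\<forall>i. i \<notin> S \<longrightarrow> \<beta> i = 0)"

definition dsum :: "nat set \<Rightarrow> (nat \<Rightarrow> nat) \<Rightarrow> nat" where
  "dsum S \<beta> = (\<Sum>i\<in>S. \<beta> i)"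

lemma is_poly_iff: "is_poly n p \<longleftrightarrow> fin p \<and> sat (suppin {1..n}) p"
  by (simp add: is_poly_def fin_def sat_def suppin_def)

lemma homog_iff: "homog n k p \<longleftrightarrow> fin p \<and> sat (suppin {1..n}) p \<and> sat (\<lambda>\<beta>. dsum {1..n} \<beta> = k) p"
  by (auto simp: homog_def is_poly_iff sat_def dsum_def)

lemma sat_zero[simp]: "sat \<Phi> 0" by (simp add: sat_def)
lemma sat_add: assumes "sat \<Phi> (p::'v::real_vector vpoly)" "sat \<Phi> q" shows "sat \<Phi> (p + q)"
  unfolding sat_def
proof (intro allI impI)
  fix \<beta> assume "(p+q) \<beta> \<noteq> 0" thus "\<Phi> \<beta>" using assms unfolding sat_def by (cases "p \<beta> = 0") auto
qed
lemma sat_scale: "sat \<Phi> (p::'v::real_vector vpoly) \<Longrightarrow> sat \<Phi> (c *\<^sub>R p)"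
  by (auto simp: sat_def)
lemma sat_neg: "sat \<Phi> (p::'v::real_vector vpoly) \<Longrightarrow> sat \<Phi> (- p)"
  by (auto simp: sat_def)
lemma sat_diff: assumes "sat \<Phi> (p::'v::real_vector vpoly)" "sat \<Phi> q" shows "sat \<Phi> (p - q)"
  unfolding sat_def
proof (intro allI impI)
  fix \<beta> assume "(p-q) \<beta> \<noteq> 0" thus "\<Phi> \<beta>" using assms unfolding sat_def by (cases "p \<beta> = 0") auto
qed
lemma sat_sum: "(\<And>x. x \<in> A \<Longrightarrow> sat \<Phi> (f x :: 'v::real_vector vpoly)) \<Longrightarrow> sat \<Phi> (sum f A)"
  by (induction A rule: infinite_finite_induct) (auto intro: sat_add)
lemma sat_mono: "sat \<Phi> p \<Longrightarrow> (\<And>\<beta>. \<Phi> \<beta> \<Longrightarrow> \<Psi> \<beta>) \<Longrightarrow> sat \<Psi> p"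
  by (auto simp: sat_def)
lemma sat_conj: "sat \<Phi> p \<Longrightarrow> sat \<Psi> p \<Longrightarrow> sat (\<lambda>\<beta>. \<Phi> \<beta> \<and> \<Psi> \<beta>) p"
  by (auto simp: sat_def)
lemma subspace_sat: "subspace {q :: 'v::real_vector vpoly. sat \<Phi> q}"
  by (auto simp: subspace_def intro: sat_add sat_scale)

lemma fin_zero[simp]: "fin 0" by (simp add: fin_def)
lemma fin_add: "fin (p::'v::real_vector vpoly) \<Longrightarrow> fin q \<Longrightarrow> fin (p + q)"
  unfolding fin_def by (rule finite_subset[of _ "{\<beta>. p \<beta> \<noteq> 0} \<union> {\<beta>. q \<beta> \<noteq> 0}"]) auto
lemma fin_scale: "fin (p::'v::real_vector vpoly) \<Longrightarrow> fin (c *\<^sub>R p)"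
  unfolding fin_def by (rule finite_subset[of _ "{\<beta>. p \<beta> \<noteq> 0}"]) auto
lemma fin_neg: "fin (p::'v::real_vector vpoly) \<Longrightarrow> fin (- p)"
  unfolding fin_def by simp
lemma fin_diff: "fin (p::'v::real_vector vpoly) \<Longrightarrow> fin q \<Longrightarrow> fin (p - q)"
  by (metis fin_add fin_neg diff_conv_add_uminus)
lemma fin_sum: "(\<And>x. x \<in> A \<Longrightarrow> fin (f x :: 'v::real_vector vpoly)) \<Longrightarrow> fin (sum f A)"
  by (induction A rule: infinite_finite_induct) (auto intro: fin_add)
lemma subspace_fin: "subspace {q :: 'v::real_vector vpoly. fin q}"
  by (auto simp: subspace_def intro: fin_add fin_scale)

lemma fin_mulx: "fin p \<Longrightarrow> fin (mulx i p)"
proof -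
  assume "fin p"
  have "{\<beta>. mulx i p \<beta> \<noteq> 0} \<subseteq> (\<lambda>\<beta>. \<beta>(i := \<beta> i + 1)) ` {\<beta>. p \<beta> \<noteq> 0}"
  proof
    fix \<beta> assume "\<beta> \<in> {\<beta>. mulx i p \<beta> \<noteq> 0}"
    then have "1 \<le> \<beta> i" "p (\<beta>(i := \<beta> i - 1)) \<noteq> 0" by (auto simp: mulx_eq split: if_splits)
    then show "\<beta> \<in> (\<lambda>\<beta>. \<beta>(i := \<beta> i + 1)) ` {\<beta>. p \<beta> \<noteq> 0}"
      by (intro image_eqI[of _ _ "\<beta>(i := \<beta> i - 1)"]) auto
  qed
  then show ?thesis using \<open>fin p\<close> unfolding fin_def by (meson finite_imageI finite_subset)
qed

lemma upd_inj: "inj (\<lambda>\<beta>::nat\<Rightarrow>nat. \<beta>(i := \<beta> i + 1))"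
proof (rule injI)
  fix a b :: "nat \<Rightarrow> nat" assume h: "a(i := a i + 1) = b(i := b i + 1)"
  show "a = b"
  proof
    fix k show "a k = b k" using fun_cong[OF h, of k] by (cases "k = i") auto
  qed
qed

lemma fin_dunkl: "fin p \<Longrightarrow> fin (dunkl \<mu> i p)"
proof -
  assume "fin p"
  have "{\<beta>. dunkl \<mu> i p \<beta> \<noteq> 0} \<subseteq> (\<lambda>\<beta>. \<beta>(i := \<beta> i + 1)) -` {\<beta>. p \<beta> \<noteq> 0}"
    by (auto simp: dunkl_eq)
  moreover have "finite ((\<lambda>\<beta>. \<beta>(i := \<beta> i + 1)) -` {\<beta>. p \<beta> \<noteq> 0})"
    using \<open>fin p\<close> upd_inj unfolding fin_def by (intro finite_vimageI) auto
  ultimately show ?thesis unfolding fin_def by (rule finite_subset)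
qed

lemma sat_mulx: "sat \<Phi> p \<Longrightarrow> (\<And>\<beta>. 1 \<le> \<beta> i \<Longrightarrow> \<Phi> (\<beta>(i := \<beta> i - 1)) \<Longrightarrow> \<Psi> \<beta>) \<Longrightarrow> sat \<Psi> (mulx i p)"
  by (auto simp: sat_def mulx_eq split: if_splits)

lemma sat_dunkl: "sat \<Phi> p \<Longrightarrow> (\<And>\<beta>. \<Phi> (\<beta>(i := \<beta> i + 1)) \<Longrightarrow> \<Psi> \<beta>) \<Longrightarrow> sat \<Psi> (dunkl \<mu> i p)"
  by (auto simp: sat_def dunkl_eq)

lemma sum_upd: "finite S \<Longrightarrow> (\<Sum>k\<in>S. (\<beta>(i:=x)) k) + (if i \<in> S then \<beta> i else 0) = (\<Sum>k\<in>S. \<beta> k) + (if i \<in> S then x else (0::nat))"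
proof (cases "i \<in> S")
  case True
  assume f: "finite S"
  have "(\<Sum>k\<in>S. (\<beta>(i:=x)) k) = x + (\<Sum>k\<in>S-{i}. (\<beta>(i:=x)) k)"
    using True f by (simp add: sum.remove)
  moreover have "(\<Sum>k\<in>S-{i}. (\<beta>(i:=x)) k) = (\<Sum>k\<in>S-{i}. \<beta> k)"
    by (rule sum.cong) auto
  moreover have "(\<Sum>k\<in>S. \<beta> k) = \<beta> i + (\<Sum>k\<in>S-{i}. \<beta> k)"
    using True f by (simp add: sum.remove)
  ultimately show ?thesis using True by simp
next
  case False
  then show ?thesis by (auto intro: sum.cong)
qed

lemma dsum_upd_in: "finite S \<Longrightarrow> i \<in> S \<Longrightarrow> dsum S (\<beta>(i:=x)) + \<beta> i = dsum S \<beta> + x"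
  using sum_upd[of S \<beta> i x] by (simp add: dsum_def)
lemma dsum_upd_out: "i \<notin> S \<Longrightarrow> dsum S (\<beta>(i:=x)) = dsum S \<beta>"
  unfolding dsum_def by (rule sum.cong) auto

lemma mulx_dunkl_comm: "i \<noteq> j \<Longrightarrow> mulx j (dunkl \<mu> i q) = dunkl \<mu> i (mulx j (q::'v::real_vector vpoly))"
proof
  fix \<beta> :: "nat \<Rightarrow> nat" assume ij: "i \<noteq> j"
  have e: "(\<beta>(j := \<beta> j - 1))(i := \<beta> i + 1) = (\<beta>(i := \<beta> i + 1))(j := \<beta> j - 1)"
    using ij by (rule fun_upd_twist[symmetric])
  show "mulx j (dunkl \<mu> i q) \<beta> = dunkl \<mu> i (mulx j q) \<beta>"
    using ij by (simp add: mulx_eq dunkl_eq fun_upd_twist[OF ij[symmetric]])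
qed

lemma dunkl_mulx_same: "dunkl \<mu> j (mulx j q) \<beta> = kap \<mu> j (\<beta> j) *\<^sub>R (q::'v::real_vector vpoly) \<beta>"
  by (simp add: dunkl_eq mulx_eq)

lemma mulx_dunkl_same: "mulx j (dunkl \<mu> j q) \<beta> = (if 1 \<le> \<beta> j then kap \<mu> j (\<beta> j - 1) *\<^sub>R (q::'v::real_vector vpoly) \<beta> else 0)"
  by (simp add: dunkl_eq mulx_eq)



lemma sat_False: "sat (\<lambda>_. False) q \<Longrightarrow> q = 0"
  by (auto simp: sat_def fun_eq_iff)

lemma mulx_pow_eq: "((mulx j ^^ r) q) \<beta> = (if r \<le> \<beta> j then (q::'v::zero vpoly) (\<beta>(j := \<beta> j - r)) else 0)"
proof (induction r arbitrary: \<beta>)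
  case 0 thus ?case by simp
next
  case (Suc r)
  have "(mulx j ^^ Suc r) q \<beta> = mulx j ((mulx j ^^ r) q) \<beta>" by simp
  also have "\<dots> = (if 1 \<le> \<beta> j then (mulx j ^^ r) q (\<beta>(j := \<beta> j - 1)) else 0)" by (rule mulx_eq)
  also have "\<dots> = (if 1 \<le> \<beta> j then (if r \<le> \<beta> j - 1 then q (\<beta>(j := \<beta> j - 1 - r)) else 0) else 0)"
    by (simp only: Suc.IH) simp
  also have "\<dots> = (if Suc r \<le> \<beta> j then q (\<beta>(j := \<beta> j - Suc r)) else 0)"
    by auto
  finally show ?case .
qed

lemma dunkl_mulx_pow:
  assumes Q: "sat (\<lambda>\<beta>. \<beta> j = 0) (Q::'v::real_vector vpoly)"
  shows "dunkl \<mu> j ((mulx j ^^ r) Q) = (if r = 0 then 0 else kap \<mu> j (r-1) *\<^sub>R (mulx j ^^ (r-1)) Q)"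
proof
  fix \<beta> :: "nat \<Rightarrow> nat"
  have z: "Q \<gamma> = 0" if "\<gamma> j \<noteq> 0" for \<gamma> using Q that by (auto simp: sat_def)
  have L: "dunkl \<mu> j ((mulx j ^^ r) Q) \<beta> = kap \<mu> j (\<beta> j) *\<^sub>R (if r \<le> \<beta> j + 1 then Q (\<beta>(j := \<beta> j + 1 - r)) else 0)"
    by (simp add: dunkl_eq mulx_pow_eq)
  show "dunkl \<mu> j ((mulx j ^^ r) Q) \<beta> = (if r = 0 then 0 else kap \<mu> j (r-1) *\<^sub>R (mulx j ^^ (r-1)) Q) \<beta>"
  proof (cases "r = 0")
    case True thus ?thesis unfolding L by (simp add: z)
  next
    case False
    show ?thesis
    proof (cases "\<beta> j + 1 = r")
      case True
      then have r: "r = Suc (\<beta> j)" by simp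
      have l1: "dunkl \<mu> j ((mulx j ^^ r) Q) \<beta> = kap \<mu> j (\<beta> j) *\<^sub>R Q (\<beta>(j := 0))"
        using L unfolding r by simp
      have l2: "(if r = 0 then 0 else kap \<mu> j (r-1) *\<^sub>R (mulx j ^^ (r-1)) Q) \<beta> = kap \<mu> j (\<beta> j) *\<^sub>R Q (\<beta>(j := 0))"
        by (simp add: r mulx_pow_eq)
      show ?thesis using l1 l2 by simp
    next
      case F2: False
      have a: "(if r \<le> \<beta> j + 1 then Q (\<beta>(j := \<beta> j + 1 - r)) else 0) = 0"
        using F2 False by (simp add: z)
      have b: "(mulx j ^^ (r-1)) Q \<beta> = 0"
        using F2 False by (simp add: mulx_pow_eq z)
      show ?thesis unfolding L a using False b by simp
    qed
  qed
qed

context dk begin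

lemma sat_em: assumes "j \<in> {1..n}" "sat \<Phi> p" shows "sat \<Phi> (em E j p)"
  unfolding sat_def em_def
proof (intro allI impI)
  fix \<beta> assume "E j (p \<beta>) \<noteq> 0"
  then have "p \<beta> \<noteq> 0" using E_zero[OF assms(1)] by auto
  then show "\<Phi> \<beta>" using assms(2) by (auto simp: sat_def)
qed
lemma fin_em: "j \<in> {1..n} \<Longrightarrow> fin p \<Longrightarrow> fin (em E j p)"
  unfolding fin_def
proof (rule finite_subset[of _ "{\<beta>. p \<beta> \<noteq> 0}"])
  assume j: "j \<in> {1..n}"
  show "{\<beta>. em E j p \<beta> \<noteq> 0} \<subseteq> {\<beta>. p \<beta> \<noteq> 0}" using E_zero[OF j] by (auto simp: em_def)
qed

lemma sat_dirac:
  assumes "l \<le> n" "sat \<Phi> p" "\<And>i \<beta>. i \<in> {1..l} \<Longrightarrow> \<Phi> (\<beta>(i := \<beta> i + 1)) \<Longrightarrow> \<Psi> \<beta>"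
  shows "sat \<Psi> (dirac \<mu> E l p)"
  unfolding sat_def
proof (intro allI impI)
  fix \<beta> assume "dirac \<mu> E l p \<beta> \<noteq> 0"
  then obtain i where i: "i \<in> {1..l}" "E i (dunkl \<mu> i p \<beta>) \<noteq> 0"
    unfolding dirac_def by (rule sum.not_neutral_contains_not_neutral)
  then have "dunkl \<mu> i p \<beta> \<noteq> 0"
  proof -
    have "i \<in> {1..n}" using i(1) assms(1) by auto
    then show ?thesis using i(2) E_zero[of i] by auto
  qed
  then have "p (\<beta>(i := \<beta> i + 1)) \<noteq> 0" by (auto simp: dunkl_eq)
  then show "\<Psi> \<beta>" using assms(2,3) i(1) by (auto simp: sat_def)
qed

lemma sat_xvec:
  assumes "l \<le> n" "sat \<Phi> p" "\<And>i \<beta>. i \<in> {1..l} \<Longrightarrow> 1 \<le> \<beta> i \<Longrightarrow> \<Phi> (\<beta>(i := \<beta> i - 1)) \<Longrightarrow> \<Psi> \<beta>"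
  shows "sat \<Psi> (xvec E l p)"
  unfolding sat_def
proof (intro allI impI)
  fix \<beta> assume "xvec E l p \<beta> \<noteq> 0"
  then obtain i where i: "i \<in> {1..l}" "E i (mulx i p \<beta>) \<noteq> 0"
    unfolding xvec_def by (rule sum.not_neutral_contains_not_neutral)
  then have "mulx i p \<beta> \<noteq> 0"
  proof -
    have "i \<in> {1..n}" using i(1) assms(1) by auto
    then show ?thesis using i(2) E_zero[of i] by auto
  qed
  then have "1 \<le> \<beta> i" "p (\<beta>(i := \<beta> i - 1)) \<noteq> 0" by (auto simp: mulx_eq split: if_splits)
  then show "\<Psi> \<beta>" using assms(2,3) i(1) by (auto simp: sat_def)
qed

lemma fin_dirac:
  assumes "l \<le> n" "fin p" shows "fin (dirac \<mu> E l p)"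
proof -
  have "{\<beta>. dirac \<mu> E l p \<beta> \<noteq> 0} \<subseteq> (\<Union>i\<in>{1..l}. {\<beta>. dunkl \<mu> i p \<beta> \<noteq> 0})"
  proof
    fix \<beta> assume "\<beta> \<in> {\<beta>. dirac \<mu> E l p \<beta> \<noteq> 0}"
    then obtain i where i: "i \<in> {1..l}" "E i (dunkl \<mu> i p \<beta>) \<noteq> 0"
      unfolding dirac_def mem_Collect_eq by (rule sum.not_neutral_contains_not_neutral)
    then have "dunkl \<mu> i p \<beta> \<noteq> 0"
  proof -
    have "i \<in> {1..n}" using i(1) assms(1) by auto
    then show ?thesis using i(2) E_zero[of i] by auto
  qed
    then show "\<beta> \<in> (\<Union>i\<in>{1..l}. {\<beta>. dunkl \<mu> i p \<beta> \<noteq> 0})" using i by auto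
  qed
  moreover have "finite (\<Union>i\<in>{1..l}. {\<beta>. dunkl \<mu> i p \<beta> \<noteq> 0})"
    using fin_dunkl[OF assms(2)] by (auto simp: fin_def)
  ultimately show ?thesis unfolding fin_def by (rule finite_subset)
qed

lemma fin_xvec:
  assumes "l \<le> n" "fin p" shows "fin (xvec E l p)"
proof -
  have "{\<beta>. xvec E l p \<beta> \<noteq> 0} \<subseteq> (\<Union>i\<in>{1..l}. {\<beta>. mulx i p \<beta> \<noteq> 0})"
  proof
    fix \<beta> assume "\<beta> \<in> {\<beta>. xvec E l p \<beta> \<noteq> 0}"
    then obtain i where i: "i \<in> {1..l}" "E i (mulx i p \<beta>) \<noteq> 0"
      unfolding xvec_def mem_Collect_eq by (rule sum.not_neutral_contains_not_neutral)
    then have "mulx i p \<beta> \<noteq> 0"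
  proof -
    have "i \<in> {1..n}" using i(1) assms(1) by auto
    then show ?thesis using i(2) E_zero[of i] by auto
  qed
    then show "\<beta> \<in> (\<Union>i\<in>{1..l}. {\<beta>. mulx i p \<beta> \<noteq> 0})" using i by auto
  qed
  moreover have "finite (\<Union>i\<in>{1..l}. {\<beta>. mulx i p \<beta> \<noteq> 0})"
    using fin_mulx[OF assms(2)] by (auto simp: fin_def)
  ultimately show ?thesis unfolding fin_def by (rule finite_subset)
qed

lemma dunkl_em: "j \<in> {1..n} \<Longrightarrow> dunkl \<mu> i (em E j q) = em E j (dunkl \<mu> i q)"
  by (simp add: fun_eq_iff dunkl_eq em_def E_scale)
lemma mulx_em: "j \<in> {1..n} \<Longrightarrow> mulx i (em E j q) = em E j (mulx i q)"
  by (simp add: fun_eq_iff mulx_eq em_def E_zero)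
lemma mulx_pow_em: "j \<in> {1..n} \<Longrightarrow> (mulx i ^^ r) (em E j q) = em E j ((mulx i ^^ r) q)"
  by (induction r) (auto simp: mulx_em)

lemma mulx_dirac_comm: "l < j \<Longrightarrow> l \<le> n \<Longrightarrow> mulx j (dirac \<mu> E l q) = dirac \<mu> E l (mulx j q)"
proof
  fix \<beta> :: "nat \<Rightarrow> nat" assume lj: "l < j" and ln: "l \<le> n"
  have "mulx j (dirac \<mu> E l q) \<beta> = (\<Sum>i=1..l. E i (mulx j (dunkl \<mu> i q) \<beta>))"
    using ln by (auto simp: mulx_eq dirac_def E_zero intro!: sum.neutral[symmetric])
  also have "\<dots> = dirac \<mu> E l (mulx j q) \<beta>"
    unfolding dirac_def using lj by (intro sum.cong refl) (simp add: mulx_dunkl_comm)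
  finally show "mulx j (dirac \<mu> E l q) \<beta> = dirac \<mu> E l (mulx j q) \<beta>" .
qed

lemma mulx_pow_dirac_comm: "l < j \<Longrightarrow> l \<le> n \<Longrightarrow> (mulx j ^^ r) (dirac \<mu> E l q) = dirac \<mu> E l ((mulx j ^^ r) q)"
  by (induction r) (auto simp: mulx_dirac_comm)

lemma dirac_em_anti:
  assumes "j \<in> {1..n}" "l < j" shows "dirac \<mu> E l (em E j q) = - em E j (dirac \<mu> E l q)"
proof
  fix \<beta> :: "nat \<Rightarrow> nat"
  have ln: "l \<le> n" using assms by auto
  have "dirac \<mu> E l (em E j q) \<beta> = (\<Sum>i=1..l. - E j (E i (dunkl \<mu> i q \<beta>)))"
    unfolding dirac_def dunkl_em[OF assms(1)] unfolding em_def using assms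
    by (intro sum.cong refl E_anti) auto
  also have "\<dots> = - em E j (dirac \<mu> E l q) \<beta>"
    by (simp add: em_def dirac_def E_sum[OF assms(1)] sum_negf)
  finally show "dirac \<mu> E l (em E j q) \<beta> = (- em E j (dirac \<mu> E l q)) \<beta>" by simp
qed

lemma dirac_split: "1 \<le> j \<Longrightarrow> dirac \<mu> E j q = dirac \<mu> E (j-1) q + em E j (dunkl \<mu> j q)"
proof
  fix \<beta> :: "nat \<Rightarrow> nat" assume "1 \<le> j"
  then have "{1..j} = insert j {1..j-1}" by auto
  moreover have "j \<notin> {1..j-1}" by auto
  ultimately show "dirac \<mu> E j q \<beta> = (dirac \<mu> E (j-1) q + em E j (dunkl \<mu> j q)) \<beta>"
    by (simp add: dirac_def em_def add.commute)
qed

lemma Fiter: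
  assumes "1 \<le> j" "j \<le> n + 1"
  shows "((\<lambda>q. mulx j (dirac \<mu> E (j-1) q)) ^^ r) g = (mulx j ^^ r) ((dirac \<mu> E (j-1) ^^ r) g)"
proof (induction r)
  case 0 thus ?case by simp
next
  case (Suc r)
  have "((\<lambda>q. mulx j (dirac \<mu> E (j-1) q)) ^^ Suc r) g = mulx j (dirac \<mu> E (j-1) ((mulx j ^^ r) ((dirac \<mu> E (j-1) ^^ r) g)))"
    using Suc by simp
  also have "\<dots> = mulx j ((mulx j ^^ r) (dirac \<mu> E (j-1) ((dirac \<mu> E (j-1) ^^ r) g)))"
    using assms by (subst mulx_pow_dirac_comm) auto
  also have "\<dots> = (mulx j ^^ Suc r) ((dirac \<mu> E (j-1) ^^ Suc r) g)" by simp
  finally show ?case .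
qed

lemma dirac_deg:
  assumes "l \<le> n" "sat (\<lambda>\<beta>. dsum {1..l} \<beta> + r \<le> d) q"
  shows "sat (\<lambda>\<beta>. dsum {1..l} \<beta> + Suc r \<le> d) (dirac \<mu> E l q)"
  using assms(1,2)
proof (rule sat_dirac)
  fix i \<beta> assume i: "i \<in> {1..l}" and h: "dsum {1..l} (\<beta>(i := \<beta> i + 1)) + r \<le> d"
  have "dsum {1..l} (\<beta>(i := \<beta> i + 1)) + \<beta> i = dsum {1..l} \<beta> + (\<beta> i + 1)"
    using i by (intro dsum_upd_in) auto
  then show "dsum {1..l} \<beta> + Suc r \<le> d" using h by linarith
qed

lemma dirac_pow_deg:
  assumes "l \<le> n" "sat (\<lambda>\<beta>. dsum {1..l} \<beta> \<le> d) q"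
  shows "sat (\<lambda>\<beta>. dsum {1..l} \<beta> + r \<le> d) ((dirac \<mu> E l ^^ r) q)"
proof (induction r)
  case 0 thus ?case using assms(2) by simp
next
  case (Suc r) thus ?case using dirac_deg[OF assms(1)] by simp
qed

lemma dirac_pow_vanish:
  assumes "l \<le> n" "sat (\<lambda>\<beta>. dsum {1..l} \<beta> \<le> d) q" "d < r"
  shows "(dirac \<mu> E l ^^ r) q = 0"
  using dirac_pow_deg[OF assms(1,2), of r] assms(3) by (intro sat_False) (auto elim: sat_mono)

end


lemma sum_fun_apply: "(sum f A) x = (\<Sum>a\<in>A. f a x)"
  by (induction A rule: infinite_finite_induct) auto

definition ca :: "(nat \<Rightarrow> real) \<Rightarrow> nat \<Rightarrow> nat \<Rightarrow> real" where
  "ca \<mu> j m = 1 / (4 ^ m * fact m * Gamma (real m + \<mu> j + 1/2))"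
definition cb :: "(nat \<Rightarrow> real) \<Rightarrow> nat \<Rightarrow> nat \<Rightarrow> real" where
  "cb \<mu> j m = 1/2 * (1 / (4 ^ m * fact m * Gamma (real m + \<mu> j + 3/2)))"
definition FF :: "(nat \<Rightarrow> real) \<Rightarrow> (nat \<Rightarrow> 'v \<Rightarrow> 'v) \<Rightarrow> nat \<Rightarrow> 'v::real_vector vpoly \<Rightarrow> 'v vpoly" where
  "FF \<mu> E j = (\<lambda>q. mulx j (dirac \<mu> E (j - 1) q))"
definition CKd :: "(nat \<Rightarrow> real) \<Rightarrow> (nat \<Rightarrow> 'v \<Rightarrow> 'v) \<Rightarrow> nat \<Rightarrow> nat \<Rightarrow> 'v::real_vector vpoly \<Rightarrow> 'v vpoly" where
  "CKd \<mu> E j M p = Gamma (\<mu> j + 1/2) *\<^sub>R (\<Sum>m\<le>M. ca \<mu> j m *\<^sub>R (FF \<mu> E j ^^ (2*m)) p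
       + cb \<mu> j m *\<^sub>R em E j ((FF \<mu> E j ^^ (2*m+1)) p))"

lemma CK_CKd: "CK \<mu> E N j p = CKd \<mu> E j (tdeg N p) p"
  unfolding CK_def CKd_def FF_def
  by (simp add: fun_eq_iff sum_fun_apply ca_def cb_def em_def)

context dk begin

lemma linear_FF: "1 \<le> j \<Longrightarrow> j \<le> n + 1 \<Longrightarrow> linear (FF \<mu> E j)"
  unfolding FF_def using linear_compose[OF linear_dirac[of "j-1"] linear_mulx[of j]]
  by (simp add: o_def)

lemma CKd_restrict:
  assumes j: "j \<in> {1..n}" and b: "\<beta> j = 0"
  shows "CKd \<mu> E j M g \<beta> = g \<beta>"
proof -
  have z: "(FF \<mu> E j ^^ Suc r) q \<beta> = 0" for r q
    by (simp add: FF_def mulx_eq b)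
  have t: "ca \<mu> j m *\<^sub>R (FF \<mu> E j ^^ (2*m)) g \<beta> + cb \<mu> j m *\<^sub>R E j ((FF \<mu> E j ^^ (2*m+1)) g \<beta>)
      = (if m = 0 then ca \<mu> j 0 *\<^sub>R g \<beta> else 0)" for m
  proof -
    have "(FF \<mu> E j ^^ (2*m+1)) g \<beta> = 0" using z[of "2*m"] by simp
    moreover have "m \<noteq> 0 \<Longrightarrow> (FF \<mu> E j ^^ (2*m)) g \<beta> = 0"
      using z[of "2*m-1" g] by (metis Suc_diff_1 nat_0_less_mult_iff neq0_conv zero_less_numeral)
    ultimately show ?thesis using E_zero[OF j] by auto
  qed
  have "CKd \<mu> E j M g \<beta> = Gamma (\<mu> j + 1/2) *\<^sub>R (\<Sum>m\<le>M. ca \<mu> j m *\<^sub>R (FF \<mu> E j ^^ (2*m)) g \<beta>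
       + cb \<mu> j m *\<^sub>R E j ((FF \<mu> E j ^^ (2*m+1)) g \<beta>))"
    by (simp add: CKd_def sum_fun_apply em_def)
  also have "\<dots> = Gamma (\<mu> j + 1/2) *\<^sub>R (ca \<mu> j 0 *\<^sub>R g \<beta>)"
    unfolding t by (simp add: sum.delta)
  also have "\<dots> = g \<beta>"
  proof -
    have "\<mu> j > 0" using mu_pos j by auto
    then have "Gamma (\<mu> j + 1/2) > 0" by (intro Gamma_real_pos) simp
    then show ?thesis by (simp add: ca_def)
  qed
  finally show ?thesis .
qed

lemma sat_CKd:
  assumes "j \<in> {1..n}" "\<And>q. sat \<Phi> q \<Longrightarrow> sat \<Phi> (FF \<mu> E j q)" "sat \<Phi> g"
  shows "sat \<Phi> (CKd \<mu> E j M g)"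
proof -
  have p: "sat \<Phi> ((FF \<mu> E j ^^ r) g)" for r
    by (induction r) (auto simp: assms(2,3))
  show ?thesis unfolding CKd_def
    by (intro sat_scale sat_sum sat_add sat_em[OF assms(1)] p)
qed

lemma fin_CKd:
  assumes "j \<in> {1..n}" "fin g"
  shows "fin (CKd \<mu> E j M g)"
proof -
  have f: "fin (FF \<mu> E j q)" if "fin q" for q
    unfolding FF_def using assms(1) that by (intro fin_mulx fin_dirac) auto
  have p: "fin ((FF \<mu> E j ^^ r) g)" for r
    by (induction r) (auto simp: assms(2) f)
  show ?thesis unfolding CKd_def
    by (intro fin_scale fin_sum fin_add fin_em[OF assms(1)] p)
qed

lemma sat_FF_supp:
  assumes "j \<in> {1..N}" "N \<le> n" "sat (suppin {1..N}) q"
  shows "sat (suppin {1..N}) (FF \<mu> E j q)"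
  unfolding FF_def
proof (rule sat_mulx)
  show "sat (suppin {1..N}) (dirac \<mu> E (j - 1) q)"
    using assms by (intro sat_dirac[OF _ assms(3)]) (auto simp: suppin_def split: if_splits)
  show "suppin {1..N} \<beta>" if "1 \<le> \<beta> j" "suppin {1..N} (\<beta>(j := \<beta> j - 1))" for \<beta>
    using that assms(1) by (auto simp: suppin_def split: if_splits)
qed

lemma sat_FF_deg:
  assumes "j \<in> {1..N}" "N \<le> n" "sat (\<lambda>\<beta>. dsum {1..N} \<beta> = d) q"
  shows "sat (\<lambda>\<beta>. dsum {1..N} \<beta> = d) (FF \<mu> E j q)"
  unfolding FF_def
proof (rule sat_mulx)
  show "sat (\<lambda>\<beta>. dsum {1..N} \<beta> + 1 = d) (dirac \<mu> E (j - 1) q)"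
  proof (rule sat_dirac[OF _ assms(3)])
    show "j - 1 \<le> n" using assms by auto
    fix i \<beta> assume i: "i \<in> {1..j-1}" and h: "dsum {1..N} (\<beta>(i := \<beta> i + 1)) = d"
    have "dsum {1..N} (\<beta>(i := \<beta> i + 1)) + \<beta> i = dsum {1..N} \<beta> + (\<beta> i + 1)"
      using i assms(1) by (intro dsum_upd_in) auto
    then show "dsum {1..N} \<beta> + 1 = d" using h by linarith
  qed
  fix \<beta> assume b: "1 \<le> \<beta> j" and h: "dsum {1..N} (\<beta>(j := \<beta> j - 1)) + 1 = d"
  have "dsum {1..N} (\<beta>(j := \<beta> j - 1)) + \<beta> j = dsum {1..N} \<beta> + (\<beta> j - 1)"
    using assms(1) by (intro dsum_upd_in) auto
  then show "dsum {1..N} \<beta> = d" using h b by linarith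
qed

lemma FF_pow_vanish:
  assumes "1 \<le> j" "j \<le> n + 1" "(dirac \<mu> E (j-1) ^^ r) g = 0"
  shows "(FF \<mu> E j ^^ r) g = 0"
proof -
  have "(FF \<mu> E j ^^ r) g = (mulx j ^^ r) ((dirac \<mu> E (j-1) ^^ r) g)"
    unfolding FF_def using Fiter[OF assms(1,2)] .
  also have "\<dots> = 0" using assms(3) linear_0[OF linear_pow[OF linear_mulx]] by simp
  finally show ?thesis .
qed

lemma CKd_extend:
  assumes j: "j \<in> {1..n}" and van: "\<And>r. d < r \<Longrightarrow> (dirac \<mu> E (j-1) ^^ r) g = 0"
    and "d \<le> M0" "M0 \<le> M"
  shows "CKd \<mu> E j M g = CKd \<mu> E j M0 g"
proof -
  let ?t = "\<lambda>m. ca \<mu> j m *\<^sub>R (FF \<mu> E j ^^ (2*m)) g + cb \<mu> j m *\<^sub>R em E j ((FF \<mu> E j ^^ (2*m+1)) g)"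
  have "sum ?t {..M} = sum ?t {..M0}"
  proof (rule sum.mono_neutral_right)
    show "\<forall>m\<in>{..M} - {..M0}. ?t m = 0"
    proof
      fix m assume "m \<in> {..M} - {..M0}"
      then have m: "M0 < m" by auto
      have a: "(FF \<mu> E j ^^ (2*m)) g = 0" using j m assms(3) by (intro FF_pow_vanish van) auto
      have b: "(FF \<mu> E j ^^ (2*m+1)) g = 0" using j m assms(3) by (intro FF_pow_vanish van) auto
      show "?t m = 0" unfolding a b using linear_0[OF linear_em[OF j]] by simp
    qed
  qed (use assms in auto)
  then show ?thesis unfolding CKd_def by simp
qed

end


lemma kap_even: "kap \<mu> j (2*m) = real (2*m+1) + 2 * \<mu> j"
  by (simp add: kap_def)
lemma kap_odd: "kap \<mu> j (2*k+1) = real (2*k+2)"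
  by (simp add: kap_def)

lemma Gamma_step: assumes "\<mu> j > 0"
  shows "Gamma (real m + \<mu> j + 3/2) = (real m + \<mu> j + 1/2) * Gamma (real m + \<mu> j + 1/2)"
proof -
  have z: "real m + \<mu> j + 1/2 \<notin> \<int>\<^sub>\<le>\<^sub>0"
    using assms nonpos_Ints_nonpos by force
  have e: "(real m + \<mu> j + 1/2) + 1 = real m + \<mu> j + 3/2" by simp
  show ?thesis using Gamma_plus1[OF z] unfolding e .
qed

lemma id1: assumes "\<mu> j > 0" shows "cb \<mu> j m * kap \<mu> j (2*m) = ca \<mu> j m"
proof -
  define A where "A = 4 ^ m * fact m * Gamma (real m + \<mu> j + 1/2)"
  define c where "c = real m + \<mu> j + 1/2"
  have g: "Gamma (real m + \<mu> j + 1/2) > 0" using assms by (intro Gamma_real_pos) simp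
  then have A: "A > 0" unfolding A_def by simp
  have c: "c > 0" unfolding c_def using assms by simp
  have c1: "cb \<mu> j m = 1 / (2 * c * A)"
    unfolding cb_def Gamma_step[of \<mu> j m, OF assms] A_def c_def by (simp add: algebra_simps)
  have c2: "kap \<mu> j (2*m) = 2 * c" unfolding kap_even c_def by simp
  have c3: "ca \<mu> j m = 1 / A" unfolding ca_def A_def by simp
  show ?thesis unfolding c1 c2 c3 using A c by (simp add: field_simps)
qed

lemma id2: assumes "\<mu> j > 0" shows "ca \<mu> j (Suc k) * kap \<mu> j (2*k+1) = cb \<mu> j k"
proof -
  have e: "real (Suc k) + \<mu> j + 1/2 = real k + \<mu> j + 3/2" by simp
  define A where "A = 4 ^ k * fact k * Gamma (real k + \<mu> j + 3/2)"
  define K where "K = real k + 1"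
  have g: "Gamma (real k + \<mu> j + 3/2) > 0" using assms by (intro Gamma_real_pos) simp
  then have A: "A > 0" unfolding A_def by simp
  have K: "K > 0" unfolding K_def by simp
  have c1: "ca \<mu> j (Suc k) = 1 / (4 * K * A)"
    unfolding ca_def e A_def K_def by (simp add: algebra_simps)
  have c2: "cb \<mu> j k = 1/2 * (1 / A)" unfolding cb_def A_def by simp
  have c3: "kap \<mu> j (2*k+1) = 2 * K" unfolding kap_odd K_def by simp
  show ?thesis unfolding c1 c2 c3 using A K by (simp add: field_simps)
qed


context dk begin

lemma CKd_monogenic:
  assumes j2: "2 \<le> j" and jn: "j \<le> n" and g0: "sat (\<lambda>\<beta>. \<beta> j = 0) g"
    and van: "(dirac \<mu> E (j-1) ^^ (2*M+2)) g = 0"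
  shows "dirac \<mu> E j (CKd \<mu> E j M g) = 0"
proof -
  have j: "j \<in> {1..n}" using j2 jn by auto
  have mj: "\<mu> j > 0" using mu_pos j by auto
  define D where "D = dirac \<mu> E (j-1)"
  define X where "X = (mulx j :: 'v vpoly \<Rightarrow> 'v vpoly)"
  define Ej where "Ej = em E j"
  define T where "T = (dunkl \<mu> j :: 'v vpoly \<Rightarrow> 'v vpoly)"
  define L where "L = dirac \<mu> E j"
  define Q where "Q r = (D ^^ r) g" for r
  have linD: "linear D" unfolding D_def using jn by (intro linear_dirac) auto
  have linL: "linear L" unfolding L_def using jn by (intro linear_dirac) auto
  have linE: "linear Ej" unfolding Ej_def using j by (rule linear_em)
  have linT: "linear T" unfolding T_def by (rule linear_dunkl)
  have linX: "linear (X ^^ r)" for r unfolding X_def by (intro linear_pow linear_mulx)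
  have L_eq: "L h = D h + Ej (T h)" for h
    unfolding L_def D_def Ej_def T_def using j by (intro dirac_split) auto
  have DX: "D ((X ^^ r) h) = (X ^^ r) (D h)" for r h
    unfolding D_def X_def using j2 jn by (intro mulx_pow_dirac_comm[symmetric]) auto
  have DE: "D (Ej h) = - Ej (D h)" for h
    unfolding D_def Ej_def using j j2 by (intro dirac_em_anti) auto
  have TE: "T (Ej h) = Ej (T h)" for h
    unfolding T_def Ej_def using j by (rule dunkl_em)
  have EE: "Ej (Ej h) = - h" for h
    unfolding Ej_def em_def using E_sq[OF j] by (simp add: fun_eq_iff)
  have nQ: "sat (\<lambda>\<beta>. \<beta> j = 0) (Q r)" for r
  proof (induction r)
    case 0 then show ?case using g0 by (simp add: Q_def)
  next
    case (Suc r)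
    have "sat (\<lambda>\<beta>. \<beta> j = 0) (D (Q r))" unfolding D_def
      using jn j2 Suc by (intro sat_dirac[OF _ Suc]) (auto split: if_splits)
    then show ?case by (simp add: Q_def)
  qed
  have TXQ: "T ((X ^^ r) (Q s)) = (if r = 0 then 0 else kap \<mu> j (r-1) *\<^sub>R (X ^^ (r-1)) (Q s))" for r s
    unfolding T_def X_def by (rule dunkl_mulx_pow[OF nQ])
  have QS: "D (Q r) = Q (Suc r)" for r by (simp add: Q_def)
  have CK_eq: "CKd \<mu> E j M g = Gamma (\<mu> j + 1/2) *\<^sub>R (\<Sum>m\<le>M. ca \<mu> j m *\<^sub>R (X ^^ (2*m)) (Q (2*m))
       + cb \<mu> j m *\<^sub>R Ej ((X ^^ (2*m+1)) (Q (2*m+1))))"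
  proof -
    have Fi: "(FF \<mu> E j ^^ r) g = (X ^^ r) (Q r)" for r
      unfolding FF_def X_def Q_def D_def using j2 jn by (intro Fiter) auto
    show ?thesis unfolding CKd_def Fi Ej_def ..
  qed
  define f where "f k = cb \<mu> j k *\<^sub>R Ej ((X ^^ (2*k+1)) (Q (2*k+2)))" for k
  have LA: "L (ca \<mu> j m *\<^sub>R (X ^^ (2*m)) (Q (2*m))) = ca \<mu> j m *\<^sub>R (X ^^ (2*m)) (Q (2*m+1))
      + ca \<mu> j m *\<^sub>R Ej (if m = 0 then 0 else kap \<mu> j (2*m-1) *\<^sub>R (X ^^ (2*m-1)) (Q (2*m)))" for m
  proof -
    have "L (ca \<mu> j m *\<^sub>R (X ^^ (2*m)) (Q (2*m))) = ca \<mu> j m *\<^sub>R L ((X ^^ (2*m)) (Q (2*m)))"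
      using linL by (rule linear_scale)
    also have "L ((X ^^ (2*m)) (Q (2*m))) = (X ^^ (2*m)) (Q (2*m+1))
       + Ej (if m = 0 then 0 else kap \<mu> j (2*m-1) *\<^sub>R (X ^^ (2*m-1)) (Q (2*m)))"
      unfolding L_eq DX QS TXQ by simp
    finally show ?thesis by (simp only: scaleR_add_right)
  qed
  have LB: "L (cb \<mu> j m *\<^sub>R Ej ((X ^^ (2*m+1)) (Q (2*m+1)))) =
      - f m - (cb \<mu> j m * kap \<mu> j (2*m)) *\<^sub>R (X ^^ (2*m)) (Q (2*m+1))" for m
  proof -
    have "L (cb \<mu> j m *\<^sub>R Ej ((X ^^ (2*m+1)) (Q (2*m+1)))) = cb \<mu> j m *\<^sub>R L (Ej ((X ^^ (2*m+1)) (Q (2*m+1))))"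
      using linL by (rule linear_scale)
    also have "L (Ej ((X ^^ (2*m+1)) (Q (2*m+1)))) = - Ej ((X ^^ (2*m+1)) (Q (2*m+2)))
        - kap \<mu> j (2*m) *\<^sub>R (X ^^ (2*m)) (Q (2*m+1))"
    proof -
      have "L (Ej ((X ^^ (2*m+1)) (Q (2*m+1)))) = - Ej (D ((X ^^ (2*m+1)) (Q (2*m+1))))
           + Ej (Ej (T ((X ^^ (2*m+1)) (Q (2*m+1)))))"
        unfolding L_eq DE TE ..
      also have "\<dots> = - Ej ((X ^^ (2*m+1)) (Q (2*m+2))) - kap \<mu> j (2*m) *\<^sub>R (X ^^ (2*m)) (Q (2*m+1))"
        unfolding EE DX QS TXQ by simp
      finally show ?thesis .
    qed
    finally show ?thesis
      by (simp only: f_def scaleR_diff_right scaleR_minus_right scaleR_scaleR)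
  qed
  have trm: "L (ca \<mu> j m *\<^sub>R (X ^^ (2*m)) (Q (2*m)) + cb \<mu> j m *\<^sub>R Ej ((X ^^ (2*m+1)) (Q (2*m+1))))
      = (if m = 0 then 0 else f (m-1)) - f m" for m
  proof -
    have A: "ca \<mu> j m *\<^sub>R (X ^^ (2*m)) (Q (2*m+1)) - (cb \<mu> j m * kap \<mu> j (2*m)) *\<^sub>R (X ^^ (2*m)) (Q (2*m+1)) = 0"
      using id1[of \<mu> j m, OF mj] by simp
    have B: "ca \<mu> j m *\<^sub>R Ej (if m = 0 then 0 else kap \<mu> j (2*m-1) *\<^sub>R (X ^^ (2*m-1)) (Q (2*m)))
        = (if m = 0 then 0 else f (m-1))"
    proof (cases m)
      case 0 then show ?thesis using linear_0[OF linE] by simp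
    next
      case (Suc k)
      have e1: "2*m-1 = 2*k+1" "2*m = 2*k+2" using Suc by auto
      have "ca \<mu> j m *\<^sub>R Ej (kap \<mu> j (2*m-1) *\<^sub>R (X ^^ (2*m-1)) (Q (2*m)))
          = (ca \<mu> j (Suc k) * kap \<mu> j (2*k+1)) *\<^sub>R Ej ((X ^^ (2*k+1)) (Q (2*k+2)))"
        unfolding e1 Suc linear_scale[OF linE] by simp
      also have "\<dots> = f k" unfolding id2[of \<mu> j k, OF mj] f_def ..
      finally show ?thesis using Suc by simp
    qed
    show ?thesis unfolding linear_add[OF linL] LA LB
      using A B by (simp add: algebra_simps)
  qed
  have tele: "(\<Sum>m\<le>N. (if m = 0 then 0 else f (m-1)) - f m) = - f N" for N
    by (induction N) auto
  have fM: "f M = 0"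
  proof -
    have "Q (2*M+2) = 0" using van by (simp add: Q_def D_def)
    then show ?thesis unfolding f_def
      by (simp only: linear_0[OF linX] linear_0[OF linE] scaleR_zero_right)
  qed
  have "L (CKd \<mu> E j M g) = Gamma (\<mu> j + 1/2) *\<^sub>R (\<Sum>m\<le>M. (if m = 0 then 0 else f (m-1)) - f m)"
    unfolding CK_eq linear_scale[OF linL] linear_sum[OF linL] trm ..
  also have "\<dots> = 0" unfolding tele fM by simp
  finally show ?thesis unfolding L_def .
qed

end


lemma kap_pair: "(if 1 \<le> a then kap \<mu> i (a - 1) else 0) + kap \<mu> i a = real (2*a+1) + 2 * \<mu> i"
proof (cases a)
  case 0 then show ?thesis by (simp add: kap_def)
next
  case (Suc b)
  then show ?thesis by (simp add: kap_def algebra_simps)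
qed

context dk begin

lemma mono_unique:
  assumes j: "1 \<le> j" "j \<le> n" and D: "dirac \<mu> E j f = 0" and z: "\<And>\<beta>. \<beta> j = 0 \<Longrightarrow> f \<beta> = 0"
  shows "f = 0"
proof -
  have jn: "j \<in> {1..n}" using j by auto
  have lev: "\<forall>\<beta>. \<beta> j = a \<longrightarrow> f \<beta> = 0" for a
  proof (induction a)
    case 0 then show ?case using z by auto
  next
    case (Suc a)
    show ?case
    proof (intro allI impI)
      fix \<beta>' :: "nat \<Rightarrow> nat" assume b': "\<beta>' j = Suc a"
      define \<beta> where "\<beta> = \<beta>'(j := a)"
      have bj: "\<beta> j = a" by (simp add: \<beta>_def)
      have bb: "\<beta>(j := \<beta> j + 1) = \<beta>'" using b' by (auto simp: \<beta>_def fun_eq_iff)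
      have "dirac \<mu> E j f \<beta> = dirac \<mu> E (j-1) f \<beta> + E j (dunkl \<mu> j f \<beta>)"
        using dirac_split[of j f] j by (simp add: em_def)
      moreover have "dirac \<mu> E (j-1) f \<beta> = 0"
        unfolding dirac_def
      proof (rule sum.neutral, rule ballI)
        fix i assume i: "i \<in> {1..j-1}"
        then have "(\<beta>(i := \<beta> i + 1)) j = a" using bj by auto
        then have "f (\<beta>(i := \<beta> i + 1)) = 0" using Suc.IH by blast
        moreover have "i \<in> {1..n}" using i j by auto
        ultimately show "E i (dunkl \<mu> i f \<beta>) = 0" using E_zero by (simp add: dunkl_eq)
      qed
      ultimately have "E j (dunkl \<mu> j f \<beta>) = 0" using D by simp
      then have "E j (E j (dunkl \<mu> j f \<beta>)) = 0" using E_zero[OF jn] by simp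
      then have "dunkl \<mu> j f \<beta> = 0" using E_sq[OF jn] by simp
      moreover have bb2: "\<beta>(j := Suc a) = \<beta>'" using bb bj by simp
      ultimately have "kap \<mu> j a *\<^sub>R f \<beta>' = 0" by (simp add: dunkl_eq bj)
      moreover have "kap \<mu> j a > 0" using mu_nonneg[OF jn] by (rule kap_pos)
      ultimately show "f \<beta>' = 0" by simp
    qed
  qed
  show ?thesis using lev by (auto simp: fun_eq_iff)
qed

definition gam :: "nat \<Rightarrow> real" where
  "gam l = real l + 2 * (\<Sum>i=1..l. \<mu> i)"

lemma anticomm:
  assumes ln: "l \<le> n" and hd: "sat (\<lambda>\<beta>. dsum {1..l} \<beta> = d) h"
  shows "xvec E l (dirac \<mu> E l h) + dirac \<mu> E l (xvec E l h) = - (2 * real d + gam l) *\<^sub>R h"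
proof
  fix \<beta> :: "nat \<Rightarrow> nat"
  define A where "A i k = mulx i (dunkl \<mu> k h) \<beta>" for i k
  define B where "B i k = dunkl \<mu> k (mulx i h) \<beta>" for i k
  have Ein: "i \<in> {1..l} \<Longrightarrow> i \<in> {1..n}" for i using ln by auto
  have X1: "xvec E l (dirac \<mu> E l h) \<beta> = (\<Sum>i=1..l. \<Sum>k=1..l. E i (E k (A i k)))"
    unfolding xvec_def
  proof (rule sum.cong[OF refl])
    fix i assume i: "i \<in> {1..l}"
    have "mulx i (dirac \<mu> E l h) \<beta> = (\<Sum>k=1..l. E k (A i k))"
      unfolding A_def using Ein by (auto simp: mulx_eq dirac_def E_zero intro!: sum.neutral[symmetric])
    then show "E i (mulx i (dirac \<mu> E l h) \<beta>) = (\<Sum>k=1..l. E i (E k (A i k)))"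
      using E_sum[OF Ein[OF i]] by simp
  qed
  have X2: "dirac \<mu> E l (xvec E l h) \<beta> = (\<Sum>i=1..l. \<Sum>k=1..l. E k (E i (B i k)))"
    unfolding dirac_def
  proof -
    have "(\<Sum>k=1..l. E k (dunkl \<mu> k (xvec E l h) \<beta>)) = (\<Sum>k=1..l. \<Sum>i=1..l. E k (E i (B i k)))"
    proof (rule sum.cong[OF refl])
      fix k assume k: "k \<in> {1..l}"
      have "dunkl \<mu> k (xvec E l h) \<beta> = (\<Sum>i=1..l. E i (B i k))"
        unfolding B_def dunkl_eq xvec_def scaleR_sum_right using Ein
        by (intro sum.cong refl) (auto simp: E_scale)
      then show "E k (dunkl \<mu> k (xvec E l h) \<beta>) = (\<Sum>i=1..l. E k (E i (B i k)))"
        using E_sum[OF Ein[OF k]] by simp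
    qed
    also have "\<dots> = (\<Sum>i=1..l. \<Sum>k=1..l. E k (E i (B i k)))" by (rule sum.swap)
    finally show "(\<Sum>k=1..l. E k (dunkl \<mu> k (xvec E l h) \<beta>)) = (\<Sum>i=1..l. \<Sum>k=1..l. E k (E i (B i k)))" .
  qed
  have AB: "i \<noteq> k \<Longrightarrow> A i k = B i k" for i k
    unfolding A_def B_def using mulx_dunkl_comm[of k i \<mu> h] by simp
  have diag: "A i i + B i i = (real (2 * \<beta> i + 1) + 2 * \<mu> i) *\<^sub>R h \<beta>" for i
  proof -
    have "A i i + B i i = ((if 1 \<le> \<beta> i then kap \<mu> i (\<beta> i - 1) else 0) + kap \<mu> i (\<beta> i)) *\<^sub>R h \<beta>"
      unfolding A_def B_def mulx_dunkl_same dunkl_mulx_same by (simp add: scaleR_add_left)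
    then show ?thesis unfolding kap_pair .
  qed
  have inner: "(\<Sum>k=1..l. E i (E k (A i k)) + E k (E i (B i k))) = - ((real (2 * \<beta> i + 1) + 2 * \<mu> i) *\<^sub>R h \<beta>)"
    if i: "i \<in> {1..l}" for i
  proof -
    have "(\<Sum>k=1..l. E i (E k (A i k)) + E k (E i (B i k)))
        = E i (E i (A i i)) + E i (E i (B i i)) + (\<Sum>k\<in>{1..l}-{i}. E i (E k (A i k)) + E k (E i (B i k)))"
      using i by (simp add: sum.remove)
    also have "(\<Sum>k\<in>{1..l}-{i}. E i (E k (A i k)) + E k (E i (B i k))) = 0"
    proof (rule sum.neutral, rule ballI)
      fix k assume k: "k \<in> {1..l}-{i}"
      then have "E k (E i (B i k)) = - E i (E k (A i k))"
        using AB[of i k] E_anti[of k i] Ein i by auto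
      then show "E i (E k (A i k)) + E k (E i (B i k)) = 0" by simp
    qed
    also have "E i (E i (A i i)) + E i (E i (B i i)) = - (A i i + B i i)"
      using E_sq[OF Ein[OF i]] by simp
    finally show ?thesis unfolding diag by simp
  qed
  have "xvec E l (dirac \<mu> E l h) \<beta> + dirac \<mu> E l (xvec E l h) \<beta>
      = (\<Sum>i=1..l. \<Sum>k=1..l. E i (E k (A i k)) + E k (E i (B i k)))"
    unfolding X1 X2 by (simp add: sum.distrib)
  also have "\<dots> = (\<Sum>i=1..l. - ((real (2 * \<beta> i + 1) + 2 * \<mu> i) *\<^sub>R h \<beta>))"
    by (rule sum.cong[OF refl]) (rule inner)
  also have "\<dots> = - ((\<Sum>i=1..l. real (2 * \<beta> i + 1) + 2 * \<mu> i) *\<^sub>R h \<beta>)"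
    by (simp add: sum_negf scaleR_sum_left)
  also have "\<dots> = (- (2 * real d + gam l) *\<^sub>R h) \<beta>"
  proof (cases "h \<beta> = 0")
    case True then show ?thesis by simp
  next
    case False
    then have "dsum {1..l} \<beta> = d" using hd by (auto simp: sat_def)
    then have s: "(\<Sum>i=1..l. real (\<beta> i)) = real d" unfolding dsum_def by (metis of_nat_sum)
    have "(\<Sum>i=1..l. real (2 * \<beta> i + 1) + 2 * \<mu> i) = 2 * (\<Sum>i=1..l. real (\<beta> i)) + real l + 2 * (\<Sum>i=1..l. \<mu> i)"
      by (simp add: sum.distrib sum_distrib_left)
    then have "(\<Sum>i=1..l. real (2 * \<beta> i + 1) + 2 * \<mu> i) = 2 * real d + gam l"
      unfolding s gam_def by simp
    then show ?thesis by (simp add: scaleR_add_left scaleR_diff_left)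
  qed
  finally show "(xvec E l (dirac \<mu> E l h) + dirac \<mu> E l (xvec E l h)) \<beta> = (- (2 * real d + gam l) *\<^sub>R h) \<beta>"
    by simp
qed

end


context dk begin

lemma sat_xvec_deg:
  assumes "l \<le> n" "sat (\<lambda>\<beta>. dsum {1..l} \<beta> = d) h"
  shows "sat (\<lambda>\<beta>. dsum {1..l} \<beta> = d + 1) (xvec E l h)"
proof (rule sat_xvec[OF assms])
  fix i \<beta> assume i: "i \<in> {1..l}" and b: "1 \<le> \<beta> i" and h: "dsum {1..l} (\<beta>(i := \<beta> i - 1)) = d"
  have "dsum {1..l} (\<beta>(i := \<beta> i - 1)) + \<beta> i = dsum {1..l} \<beta> + (\<beta> i - 1)"
    using i by (intro dsum_upd_in) auto
  then show "dsum {1..l} \<beta> = d + 1" using h b by linarith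
qed

lemma sat_xvec_pow_deg:
  assumes "l \<le> n" "sat (\<lambda>\<beta>. dsum {1..l} \<beta> = d) h"
  shows "sat (\<lambda>\<beta>. dsum {1..l} \<beta> = d + r) ((xvec E l ^^ r) h)"
proof (induction r)
  case 0 then show ?case using assms(2) by simp
next
  case (Suc r) then show ?case using sat_xvec_deg[OF assms(1) Suc] by simp
qed

lemma sat_xvec_supp:
  assumes "l \<le> N" "N \<le> n" "sat (suppin {1..N}) h"
  shows "sat (suppin {1..N}) (xvec E l h)"
  using assms(2) assms(1,3)
proof (intro sat_xvec[OF _ assms(3)])
  fix i \<beta> assume i: "i \<in> {1..l}" and h: "suppin {1..N} (\<beta>(i := \<beta> i - 1))"
  show "suppin {1..N} \<beta>" unfolding suppin_def
  proof (intro allI impI)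
    fix k assume k: "k \<notin> {1..N}"
    then have "k \<noteq> i" using i assms(1) by auto
    then show "\<beta> k = 0" using h k unfolding suppin_def by (metis fun_upd_other)
  qed
qed (use assms in auto)

definition cx :: "nat \<Rightarrow> nat \<Rightarrow> nat \<Rightarrow> real" where
  "cx l m i = (if even i then - real i else - (2 * real m + real (i - 1) + gam l))"

lemma gam_pos: "1 \<le> l \<Longrightarrow> l \<le> n \<Longrightarrow> gam l > 0"
proof -
  assume l: "1 \<le> l" "l \<le> n"
  have "(\<Sum>i=1..l. \<mu> i) \<ge> 0" using l mu_nonneg by (intro sum_nonneg) auto
  then show ?thesis unfolding gam_def using l by simp
qed

lemma cx_nz: "1 \<le> l \<Longrightarrow> l \<le> n \<Longrightarrow> i \<noteq> 0 \<Longrightarrow> cx l m i \<noteq> 0"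
  using gam_pos[of l] unfolding cx_def by (auto split: if_splits)

lemma dirac_xpow:
  assumes ln: "l \<le> n" and gd: "sat (\<lambda>\<beta>. dsum {1..l} \<beta> = m) g" and gm: "dirac \<mu> E l g = 0"
  shows "dirac \<mu> E l ((xvec E l ^^ Suc i) g) = cx l m (Suc i) *\<^sub>R (xvec E l ^^ i) g"
proof (induction i)
  have linx: "linear (xvec E l)" using ln by (rule linear_xvec)
  case 0
  have ac: "xvec E l (dirac \<mu> E l g) + dirac \<mu> E l (xvec E l g) = - (2 * real m + gam l) *\<^sub>R g"
    using anticomm[OF ln gd] by simp
  have "xvec E l (dirac \<mu> E l g) = 0" unfolding gm by (rule linear_0[OF linx])
  then have "dirac \<mu> E l (xvec E l g) = - (2 * real m + gam l) *\<^sub>R g" using ac by simp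
  moreover have "cx l m (Suc 0) = - (2 * real m + gam l)" by (simp add: cx_def)
  ultimately show ?case by simp
next
  case (Suc i)
  have linx: "linear (xvec E l)" using ln by (rule linear_xvec)
  define h where "h = (xvec E l ^^ Suc i) g"
  have hd: "sat (\<lambda>\<beta>. dsum {1..l} \<beta> = m + Suc i) h" unfolding h_def by (rule sat_xvec_pow_deg[OF ln gd])
  have ac: "xvec E l (dirac \<mu> E l h) + dirac \<mu> E l (xvec E l h) = - (2 * real (m + Suc i) + gam l) *\<^sub>R h"
    by (rule anticomm[OF ln hd])
  have "xvec E l (dirac \<mu> E l h) = cx l m (Suc i) *\<^sub>R xvec E l ((xvec E l ^^ i) g)"
    unfolding h_def Suc.IH by (rule linear_scale[OF linx])
  also have "xvec E l ((xvec E l ^^ i) g) = h" by (simp add: h_def)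
  finally have e1: "xvec E l (dirac \<mu> E l h) = cx l m (Suc i) *\<^sub>R h" .
  have "dirac \<mu> E l (xvec E l h) = - (2 * real (m + Suc i) + gam l) *\<^sub>R h - xvec E l (dirac \<mu> E l h)"
    using ac by (metis add_diff_cancel_left')
  then have "dirac \<mu> E l (xvec E l h) = - (2 * real (m + Suc i) + gam l) *\<^sub>R h - cx l m (Suc i) *\<^sub>R h"
    unfolding e1 .
  also have "\<dots> = (- (2 * real (m + Suc i) + gam l) - cx l m (Suc i)) *\<^sub>R h"
    by (simp only: scaleR_diff_left)
  also have "- (2 * real (m + Suc i) + gam l) - cx l m (Suc i) = cx l m (Suc (Suc i))"
    by (auto simp: cx_def)
  finally show ?case by (simp add: h_def)
qed

lemma fischer_direct:
  assumes l: "1 \<le> l" "l \<le> n"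
  shows "(\<forall>i\<le>K. sat (\<lambda>\<beta>. dsum {1..l} \<beta> = m i) (g i) \<and> dirac \<mu> E l (g i) = 0)
    \<Longrightarrow> (\<Sum>i\<le>K. (xvec E l ^^ i) (g i)) = 0 \<Longrightarrow> \<forall>i\<le>K. g i = 0"
proof (induction K arbitrary: g m)
  case 0 then show ?case by simp
next
  case (Suc K)
  have linD: "linear (dirac \<mu> E l)" using l by (intro linear_dirac) auto
  have linX: "linear (xvec E l ^^ i)" for i using l by (intro linear_pow linear_xvec) auto
  define c where "c i = cx l (m (Suc i)) (Suc i)" for i
  define g' where "g' i = c i *\<^sub>R g (Suc i)" for i
  have S: "(\<Sum>i\<le>Suc K. (xvec E l ^^ i) (g i)) = g 0 + (\<Sum>i\<le>K. (xvec E l ^^ Suc i) (g (Suc i)))"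
    by (subst sum.atMost_Suc_shift) simp
  have "dirac \<mu> E l (\<Sum>i\<le>Suc K. (xvec E l ^^ i) (g i)) = 0" by (simp only: Suc.prems(2) linear_0[OF linD])
  then have "dirac \<mu> E l (g 0) + (\<Sum>i\<le>K. dirac \<mu> E l ((xvec E l ^^ Suc i) (g (Suc i)))) = 0"
    unfolding S linear_add[OF linD] linear_sum[OF linD] .
  moreover have "dirac \<mu> E l (g 0) = 0" using Suc.prems(1) by auto
  moreover have "dirac \<mu> E l ((xvec E l ^^ Suc i) (g (Suc i))) = (xvec E l ^^ i) (g' i)" if "i \<le> K" for i
  proof -
    have "sat (\<lambda>\<beta>. dsum {1..l} \<beta> = m (Suc i)) (g (Suc i))" "dirac \<mu> E l (g (Suc i)) = 0"
      using Suc.prems(1) that by auto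
    then have "dirac \<mu> E l ((xvec E l ^^ Suc i) (g (Suc i))) = c i *\<^sub>R (xvec E l ^^ i) (g (Suc i))"
      using dirac_xpow[OF l(2)] unfolding c_def by blast
    then show ?thesis unfolding g'_def linear_scale[OF linX] .
  qed
  ultimately have Z: "(\<Sum>i\<le>K. (xvec E l ^^ i) (g' i)) = 0" by simp
  have P: "\<forall>i\<le>K. sat (\<lambda>\<beta>. dsum {1..l} \<beta> = m (Suc i)) (g' i) \<and> dirac \<mu> E l (g' i) = 0"
    using Suc.prems(1) unfolding g'_def by (auto intro: sat_scale simp: linear_scale[OF linD])
  have g'0: "\<forall>i\<le>K. g' i = 0" by (rule Suc.IH[OF P Z])
  have gS: "g (Suc i) = 0" if "i \<le> K" for i
  proof -
    have "c i \<noteq> 0" unfolding c_def using l by (intro cx_nz) auto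
    then show ?thesis using g'0 that unfolding g'_def by auto
  qed
  have "(\<Sum>i\<le>K. (xvec E l ^^ Suc i) (g (Suc i))) = 0"
    using gS linear_0[OF linX] linear_0[OF linear_xvec[OF l(2)]] by (intro sum.neutral) auto
  then have "(\<Sum>i\<le>Suc K. (xvec E l ^^ i) (g i)) = g 0" unfolding S by (simp only: add_0_right)
  then have "g 0 = 0" using Suc.prems(2) by (simp only:)
  then show ?case using gS by (metis Suc_le_mono not0_implies_Suc)
qed

end


lemma tdeg_bound:
  assumes "fin p" "p \<beta> \<noteq> 0" shows "dsum {1..N} \<beta> \<le> tdeg N p"
proof -
  have "finite ((\<lambda>\<alpha>. \<Sum>i=1..N. \<alpha> i) ` {\<alpha>. p \<alpha> \<noteq> 0})" using assms(1) by (simp add: fin_def)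
  moreover have "(\<Sum>i=1..N. \<beta> i) \<in> insert 0 ((\<lambda>\<alpha>. \<Sum>i=1..N. \<alpha> i) ` {\<alpha>. p \<alpha> \<noteq> 0})"
    using assms(2) by auto
  ultimately show ?thesis unfolding tdeg_def dsum_def by (intro Max_ge) auto
qed

lemma dsum_mono: "S \<subseteq> T \<Longrightarrow> finite T \<Longrightarrow> dsum S \<beta> \<le> dsum T \<beta>"
  unfolding dsum_def by (rule sum_mono2) auto

context dk begin

lemma linear_CKd: assumes "j \<in> {1..n}" shows "linear (CKd \<mu> E j M)"
proof -
  have lF: "linear (FF \<mu> E j ^^ r)" for r using assms by (intro linear_pow linear_FF) auto
  have lE: "linear (em E j)" using assms by (rule linear_em)
  have "linear (\<lambda>p. Gamma (\<mu> j + 1/2) *\<^sub>R (\<Sum>m\<le>M. ca \<mu> j m *\<^sub>R (FF \<mu> E j ^^ (2*m)) p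
       + cb \<mu> j m *\<^sub>R em E j ((FF \<mu> E j ^^ (2*m+1)) p)))"
    using lF lE
    by (intro linear_compose_scale_right linear_compose_sum ballI linear_compose_add
        linear_compose[unfolded o_def, OF lF lE]) auto
  moreover have "CKd \<mu> E j M = (\<lambda>p. Gamma (\<mu> j + 1/2) *\<^sub>R (\<Sum>m\<le>M. ca \<mu> j m *\<^sub>R (FF \<mu> E j ^^ (2*m)) p
       + cb \<mu> j m *\<^sub>R em E j ((FF \<mu> E j ^^ (2*m+1)) p)))"
    by (rule ext) (simp only: CKd_def)
  ultimately show ?thesis by simp
qed

lemma deg_tdeg:
  assumes "fin q" "l \<le> n" shows "sat (\<lambda>\<beta>. dsum {1..l} \<beta> \<le> tdeg n q) q"
  unfolding sat_def
proof (intro allI impI)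
  fix \<beta> assume "q \<beta> \<noteq> 0"
  then have "dsum {1..n} \<beta> \<le> tdeg n q" by (rule tdeg_bound[OF assms(1)])
  moreover have "dsum {1..l} \<beta> \<le> dsum {1..n} \<beta>" using assms(2) by (intro dsum_mono) auto
  ultimately show "dsum {1..l} \<beta> \<le> tdeg n q" by linarith
qed

lemma CK_as_CKd:
  assumes j: "j \<in> {1..n}" and f: "fin q" and M: "tdeg n q \<le> M"
  shows "CK \<mu> E n j q = CKd \<mu> E j M q"
proof -
  have "CKd \<mu> E j M q = CKd \<mu> E j (tdeg n q) q"
  proof (rule CKd_extend[OF j _ order.refl M])
    fix r assume "tdeg n q < r"
    then show "(dirac \<mu> E (j-1) ^^ r) q = 0"
      using j by (intro dirac_pow_vanish[OF _ deg_tdeg[OF f]]) auto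
  qed
  then show ?thesis by (simp add: CK_CKd)
qed

lemma CK_sum:
  assumes j: "j \<in> {1..n}" and fA: "finite A" and f: "\<And>x. x \<in> A \<Longrightarrow> fin (p x)"
  shows "CK \<mu> E n j (\<Sum>x\<in>A. c x *\<^sub>R p x) = (\<Sum>x\<in>A. c x *\<^sub>R CK \<mu> E n j (p x))"
proof -
  define q where "q = (\<Sum>x\<in>A. c x *\<^sub>R p x)"
  define M where "M = max (tdeg n q) (Max (insert 0 ((\<lambda>x. tdeg n (p x)) ` A)))"
  have fq: "fin q" unfolding q_def using f by (intro fin_sum fin_scale) auto
  have "CK \<mu> E n j q = CKd \<mu> E j M q" using j fq by (intro CK_as_CKd) (auto simp: M_def)
  also have "\<dots> = (\<Sum>x\<in>A. c x *\<^sub>R CKd \<mu> E j M (p x))"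
    unfolding q_def using linear_CKd[OF j] by (simp add: linear_sum linear_scale)
  also have "\<dots> = (\<Sum>x\<in>A. c x *\<^sub>R CK \<mu> E n j (p x))"
  proof (rule sum.cong[OF refl])
    fix x assume x: "x \<in> A"
    have "tdeg n (p x) \<le> M" unfolding M_def using fA x by (intro max.coboundedI2 Max_ge) auto
    then show "c x *\<^sub>R CKd \<mu> E j M (p x) = c x *\<^sub>R CK \<mu> E n j (p x)"
      using j f[OF x] by (subst CK_as_CKd) auto
  qed
  finally show ?thesis unfolding q_def .
qed

lemma CK_restrict:
  assumes "j \<in> {1..n}" "\<beta> j = 0" shows "CK \<mu> E n j q \<beta> = q \<beta>"
  unfolding CK_CKd using assms by (rule CKd_restrict)

lemma CK_mono:
  assumes j: "2 \<le> j" "j \<le> n" and f: "fin q" and s: "sat (suppin {1..j-1}) q"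
  shows "dirac \<mu> E j (CK \<mu> E n j q) = 0"
  unfolding CK_CKd
proof (rule CKd_monogenic[OF j])
  show "sat (\<lambda>\<beta>. \<beta> j = 0) q" using s
  proof (rule sat_mono)
    fix \<beta> assume "suppin {1..j-1} \<beta>"
    then show "\<beta> j = 0" unfolding suppin_def using j by auto
  qed
  show "(dirac \<mu> E (j-1) ^^ (2 * tdeg n q + 2)) q = 0"
    using j by (intro dirac_pow_vanish[OF _ deg_tdeg[OF f]]) auto
qed

end


definition AA :: "nat \<Rightarrow> nat \<Rightarrow> (nat \<Rightarrow> nat) set" where
  "AA l d = {\<alpha>. (\<forall>i. i \<notin> {1..l} \<longrightarrow> \<alpha> i = 0) \<and> (\<Sum>i=1..l. \<alpha> i) = d}"

lemma chain_local:
  "(\<And>i. i \<in> {1..l} \<Longrightarrow> jj i = jj' i) \<Longrightarrow> chain \<mu> E N jj v l = chain \<mu> E N jj' v l"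
proof (induction l rule: less_induct)
  case (less l)
  show ?case
  proof (cases l)
    case 0 then show ?thesis by simp
  next
    case (Suc k)
    show ?thesis
    proof (cases k)
      case 0 then show ?thesis using Suc less.prems by simp
    next
      case (Suc k')
      have "chain \<mu> E N jj v (Suc k') = chain \<mu> E N jj' v (Suc k')"
        using less.IH[of "Suc k'"] less.prems \<open>l = Suc k\<close> Suc by auto
      moreover have "jj (Suc (Suc k')) = jj' (Suc (Suc k'))" using less.prems \<open>l = Suc k\<close> Suc by auto
      ultimately show ?thesis using \<open>l = Suc k\<close> Suc by simp
    qed
  qed
qed

context dk begin

lemma sat_xvec_pow_supp:
  assumes "l \<le> N" "N \<le> n" "sat (suppin {1..N}) h"
  shows "sat (suppin {1..N}) ((xvec E l ^^ r) h)"
proof (induction r)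
  case 0 then show ?case using assms(3) by simp
next
  case (Suc r) then show ?case using sat_xvec_supp[OF assms(1,2) Suc.IH] by simp
qed

lemma fin_xvec_pow: "l \<le> n \<Longrightarrow> fin h \<Longrightarrow> fin ((xvec E l ^^ r) h)"
  by (induction r) (auto intro: fin_xvec)

lemma chain_props:
  "1 \<le> l \<Longrightarrow> l \<le> n \<Longrightarrow> fin (chain \<mu> E n jj v l) \<and> sat (suppin {1..l}) (chain \<mu> E n jj v l)
     \<and> sat (\<lambda>\<beta>. dsum {1..l} \<beta> = (\<Sum>i=1..l. jj i)) (chain \<mu> E n jj v l)"
proof (induction l rule: less_induct)
  case (less l)
  show ?case
  proof (cases l)
    case 0 then show ?thesis using less.prems by simp
  next
    case (Suc k)
    show ?thesis
    proof (cases k)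
      case 0
      have f: "fin (mono ((\<lambda>_. 0)(1 := jj 1)) v)"
        unfolding fin_def mono_def by (rule finite_subset[of _ "{(\<lambda>_. 0)(1 := jj 1)}"]) auto
      have s: "sat (suppin {1..1}) (mono ((\<lambda>_. 0)(1 := jj 1)) v)"
        by (auto simp: sat_def mono_def suppin_def)
      have d: "sat (\<lambda>\<beta>. dsum {1..1} \<beta> = (\<Sum>i=1..1. jj i)) (mono ((\<lambda>_. 0)(1 := jj 1)) v)"
        by (auto simp: sat_def mono_def dsum_def)
      show ?thesis using f s d Suc 0 by simp
    next
      case (Suc k')
      define L where "L = Suc (Suc k')"
      have lL: "l = L" using \<open>l = Suc k\<close> Suc by (simp add: L_def)
      define p where "p = chain \<mu> E n jj v (Suc k')"
      define d where "d = (\<Sum>i=1..Suc k'. jj i)"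
      have Ln: "L \<le> n" using less.prems lL by simp
      have jL: "L \<in> {1..n}" using Ln by (simp add: L_def)
      have IH: "fin p \<and> sat (suppin {1..Suc k'}) p \<and> sat (\<lambda>\<beta>. dsum {1..Suc k'} \<beta> = d) p"
        unfolding p_def d_def using less.IH[of "Suc k'"] lL Ln by (simp add: L_def)
      have sp: "sat (suppin {1..L}) p" using IH by (auto elim!: sat_mono simp: suppin_def L_def)
      have dp: "sat (\<lambda>\<beta>. dsum {1..L} \<beta> = d) p"
      proof -
        have "sat (\<lambda>\<beta>. dsum {1..Suc k'} \<beta> = d \<and> suppin {1..Suc k'} \<beta>) p"
          using IH by (intro sat_conj) auto
        then show ?thesis
          by (rule sat_mono) (auto simp: dsum_def L_def suppin_def)
      qed
      have C: "CK \<mu> E n L p = CKd \<mu> E L (tdeg n p) p" by (rule CK_CKd)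
      have fC: "fin (CK \<mu> E n L p)" unfolding C using jL IH by (intro fin_CKd) auto
      have sC: "sat (suppin {1..L}) (CK \<mu> E n L p)" unfolding C
        using jL Ln sp by (intro sat_CKd sat_FF_supp) (auto simp: L_def)
      have dC: "sat (\<lambda>\<beta>. dsum {1..L} \<beta> = d) (CK \<mu> E n L p)" unfolding C
        using jL Ln dp by (intro sat_CKd sat_FF_deg) (auto simp: L_def)
      have ch: "chain \<mu> E n jj v l = (xvec E L ^^ jj L) (CK \<mu> E n L p)"
        using lL by (simp add: L_def p_def)
      have "fin (chain \<mu> E n jj v l)" unfolding ch using Ln fC by (rule fin_xvec_pow)
      moreover have "sat (suppin {1..l}) (chain \<mu> E n jj v l)"
      proof -
        have "sat (suppin {1..L}) ((xvec E L ^^ jj L) (CK \<mu> E n L p))"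
          using Ln sC by (intro sat_xvec_pow_supp) auto
        then show ?thesis using ch lL by simp
      qed
      moreover have "sat (\<lambda>\<beta>. dsum {1..l} \<beta> = (\<Sum>i=1..l. jj i)) (chain \<mu> E n jj v l)"
      proof -
        have "(\<Sum>i=1..l. jj i) = d + jj L" unfolding lL L_def d_def by simp
        moreover have "sat (\<lambda>\<beta>. dsum {1..L} \<beta> = d + jj L) ((xvec E L ^^ jj L) (CK \<mu> E n L p))"
          by (rule sat_xvec_pow_deg[OF Ln dC])
        ultimately show ?thesis using ch lL by simp
      qed
      ultimately show ?thesis by blast
    qed
  qed
qed

end


definition indep_fam :: "('i \<Rightarrow> 'v::real_vector vpoly) \<Rightarrow> 'i set \<Rightarrow> bool" where
  "indep_fam F I \<longleftrightarrow> finite I \<and> (\<forall>c. (\<Sum>x\<in>I. c x *\<^sub>R F x) = 0 \<longrightarrow> (\<forall>x\<in>I. c x = 0))"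

lemma AA_finite: "finite (AA l d)"
proof -
  let ?ext = "\<lambda>f::nat\<Rightarrow>nat. \<lambda>i. if i \<in> {1..l} then f i else 0"
  have "AA l d \<subseteq> ?ext ` (PiE {1..l} (\<lambda>_. {0..d}))"
  proof
    fix \<alpha> assume a: "\<alpha> \<in> AA l d"
    have "\<alpha> i \<le> d" if "i \<in> {1..l}" for i
    proof -
      have "\<alpha> i \<le> (\<Sum>i=1..l. \<alpha> i)" using that by (intro member_le_sum) auto
      then show ?thesis using a by (simp add: AA_def)
    qed
    then have "restrict \<alpha> {1..l} \<in> PiE {1..l} (\<lambda>_. {0..d})" by auto
    moreover have "\<alpha> = ?ext (restrict \<alpha> {1..l})" using a by (auto simp: AA_def fun_eq_iff)
    ultimately show "\<alpha> \<in> ?ext ` (PiE {1..l} (\<lambda>_. {0..d}))" by blast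
  qed
  moreover have "finite (PiE {1..l} (\<lambda>_. {0..d::nat}))" by (intro finite_PiE) auto
  ultimately show ?thesis by (meson finite_imageI finite_subset)
qed

lemma AA_split:
  assumes "J \<in> AA (Suc l) d"
  shows "J (Suc l) \<le> d" "J(Suc l := 0) \<in> AA l (d - J (Suc l))"
proof -
  have s: "(\<Sum>i=1..Suc l. J i) = d" using assms by (simp add: AA_def)
  have e: "(\<Sum>i=1..Suc l. J i) = (\<Sum>i=1..l. J i) + J (Suc l)" by simp
  show "J (Suc l) \<le> d" using s e by linarith
  have "(\<Sum>i=1..l. (J(Suc l := 0)) i) = (\<Sum>i=1..l. J i)" by (rule sum.cong) auto
  then show "J(Suc l := 0) \<in> AA l (d - J (Suc l))" using assms s e by (auto simp: AA_def)
qed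

lemma AA_join:
  assumes "J' \<in> AA l e" "i + e = d"
  shows "J'(Suc l := i) \<in> AA (Suc l) d"
proof -
  have "(\<Sum>k=1..l. (J'(Suc l := i)) k) = (\<Sum>k=1..l. J' k)" by (rule sum.cong) auto
  then show ?thesis using assms by (auto simp: AA_def)
qed

lemma AA_out: "J \<in> AA l d \<Longrightarrow> J (Suc l) = 0"
  by (auto simp: AA_def)

lemma chain_step:
  "1 \<le> l \<Longrightarrow> chain \<mu> E N J v (Suc l) = (xvec E (Suc l) ^^ J (Suc l)) (CK \<mu> E N (Suc l) (chain \<mu> E N J v l))"
  by (cases l) auto

context dk begin

lemma chain_indep_base:
  assumes indepB: "independent B" and finB: "finite B"
  shows "indep_fam (\<lambda>(J, v). chain \<mu> E n J v 1) (AA 1 d \<times> B)"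
proof -
  define J0 where "J0 = (\<lambda>_::nat. 0::nat)(1 := d)"
  have A1: "AA 1 d = {J0}" by (auto simp: AA_def J0_def fun_eq_iff)
  have ch: "chain \<mu> E n J v 1 = mono J0 v" if "J \<in> AA 1 d" for J v
    using that A1 by (simp add: J0_def)
  show ?thesis unfolding indep_fam_def
  proof (intro conjI allI impI ballI)
    show "finite (AA 1 d \<times> B)" using AA_finite finB by simp
    fix c x assume Z: "(\<Sum>x\<in>AA 1 d \<times> B. c x *\<^sub>R (case x of (J, v) \<Rightarrow> chain \<mu> E n J v 1)) = 0"
      and x: "x \<in> AA 1 d \<times> B"
    have "(\<Sum>x\<in>AA 1 d \<times> B. c x *\<^sub>R (case x of (J, v) \<Rightarrow> chain \<mu> E n J v 1)) J0 = (\<Sum>x\<in>AA 1 d \<times> B. c x *\<^sub>R snd x)"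
      unfolding sum_fun_apply
    proof (intro sum.cong refl)
      fix y assume y: "y \<in> AA 1 d \<times> B"
      then obtain J v where yv: "y = (J, v)" "J = J0" using A1 by auto
      have "chain \<mu> E n J0 v 1 = mono J0 v" by (simp add: J0_def)
      then show "(c y *\<^sub>R (case y of (J, v) \<Rightarrow> chain \<mu> E n J v 1)) J0 = c y *\<^sub>R snd y"
        using yv by (simp add: mono_def)
    qed
    also have "\<dots> = (\<Sum>v\<in>B. c (J0, v) *\<^sub>R v)"
    proof -
      have "{J0} \<times> B = Pair J0 ` B" by auto
      then show ?thesis unfolding A1 by (simp add: sum.reindex inj_on_def)
    qed
    finally have "(\<Sum>v\<in>B. c (J0, v) *\<^sub>R v) = 0" using Z by simp
    moreover have "\<not> (\<exists>u. (\<exists>v\<in>B. u v \<noteq> 0) \<and> (\<Sum>v\<in>B. u v *\<^sub>R v) = 0)"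
      using indepB unfolding real_vector.dependent_finite[OF finB] .
    ultimately have "\<forall>v\<in>B. c (J0, v) = 0"
      using exI[of "\<lambda>u. (\<exists>v\<in>B. u v \<noteq> 0) \<and> (\<Sum>v\<in>B. u v *\<^sub>R v) = 0" "\<lambda>v. c (J0, v)"] by auto
    then show "c x = 0" using x A1 by auto
  qed
qed


lemma chain_indep:
  assumes indepB: "independent B" and finB: "finite B"
  shows "1 \<le> l \<Longrightarrow> l \<le> n \<Longrightarrow> indep_fam (\<lambda>(J, v). chain \<mu> E n J v l) (AA l d \<times> B)"
proof (induction l arbitrary: d)
  case 0 then show ?case by simp
next
  case (Suc l)
  show ?case
  proof (cases "l = 0")
    case True then show ?thesis using chain_indep_base[OF indepB finB] by simp
  next
    case False
    then have l1: "1 \<le> l" by simp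
    define L where "L = Suc l"
    have Ln: "L \<le> n" using Suc.prems L_def by simp
    have L2: "2 \<le> L" using l1 L_def by simp
    have jL: "L \<in> {1..n}" using Ln L2 by simp
    have IH: "indep_fam (\<lambda>(J, v). chain \<mu> E n J v l) (AA l e \<times> B)" for e
      using Suc.IH[of e] l1 Suc.prems by simp
    define S where "S = AA L d \<times> B"
    have finS: "finite S" unfolding S_def using AA_finite finB by simp
    define ch where "ch x = chain \<mu> E n (fst x) (snd x) l" for x :: "(nat \<Rightarrow> nat) \<times> 'v"
    show ?thesis unfolding indep_fam_def L_def[symmetric] S_def[symmetric]
    proof (intro conjI allI impI)
      show "finite S" by (rule finS)
      fix c assume Z: "(\<Sum>x\<in>S. c x *\<^sub>R (case x of (J, v) \<Rightarrow> chain \<mu> E n J v L)) = 0"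
      define Si where "Si i = {x \<in> S. fst x L = i}" for i
      define H where "H i = (\<Sum>x\<in>Si i. c x *\<^sub>R ch x)" for i
      define G where "G i = CK \<mu> E n L (H i)" for i
      have xS: "fst x L \<le> d" "(fst x)(L := 0) \<in> AA l (d - fst x L)" if "x \<in> S" for x
        using that AA_split[of "fst x" l d] unfolding S_def L_def by (auto simp: mem_Times_iff)
      have chp: "fin (ch x) \<and> sat (suppin {1..l}) (ch x) \<and> sat (\<lambda>\<beta>. dsum {1..l} \<beta> = d - fst x L) (ch x)"
        if "x \<in> S" for x
      proof -
        have "(\<Sum>i=1..l. fst x i) = (\<Sum>i=1..l. ((fst x)(L := 0)) i)" unfolding L_def by (rule sum.cong) auto
        also have "\<dots> = d - fst x L" using xS(2)[OF that] by (simp add: AA_def)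
        finally show ?thesis unfolding ch_def using chain_props[OF l1, of "fst x" "snd x"] Suc.prems by simp
      qed
      have chL: "(case x of (J, v) \<Rightarrow> chain \<mu> E n J v L) = (xvec E L ^^ fst x L) (CK \<mu> E n L (ch x))" for x
        unfolding ch_def L_def using chain_step[OF l1] by (simp add: case_prod_beta)
      have finH: "fin (H i)" for i unfolding H_def
        using chp by (intro fin_sum fin_scale) (auto simp: Si_def)
      have suppH: "sat (suppin {1..l}) (H i)" for i unfolding H_def
        using chp by (intro sat_sum sat_scale) (auto simp: Si_def)
      have degH: "sat (\<lambda>\<beta>. dsum {1..l} \<beta> = d - i) (H i)" for i unfolding H_def
        using chp by (intro sat_sum sat_scale) (auto simp: Si_def)
      have E1: "(\<Sum>x\<in>S. c x *\<^sub>R (case x of (J, v) \<Rightarrow> chain \<mu> E n J v L)) = (\<Sum>i\<in>{..d}. (xvec E L ^^ i) (G i))"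
      proof -
        have "(\<Sum>x\<in>S. c x *\<^sub>R (case x of (J, v) \<Rightarrow> chain \<mu> E n J v L))
            = (\<Sum>i\<in>{..d}. \<Sum>x\<in>Si i. c x *\<^sub>R (case x of (J, v) \<Rightarrow> chain \<mu> E n J v L))"
          unfolding Si_def using finS xS(1) by (intro sum.group[symmetric]) auto
        also have "\<dots> = (\<Sum>i\<in>{..d}. (xvec E L ^^ i) (G i))"
        proof (rule sum.cong[OF refl])
          fix i
          have linX: "linear (xvec E L ^^ i)" using Ln by (intro linear_pow linear_xvec)
          have "(\<Sum>x\<in>Si i. c x *\<^sub>R (case x of (J, v) \<Rightarrow> chain \<mu> E n J v L))
              = (\<Sum>x\<in>Si i. c x *\<^sub>R (xvec E L ^^ i) (CK \<mu> E n L (ch x)))"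
            unfolding chL by (intro sum.cong refl) (simp add: Si_def)
          also have "\<dots> = (xvec E L ^^ i) (\<Sum>x\<in>Si i. c x *\<^sub>R CK \<mu> E n L (ch x))"
            by (simp add: linear_sum[OF linX] linear_scale[OF linX])
          also have "(\<Sum>x\<in>Si i. c x *\<^sub>R CK \<mu> E n L (ch x)) = G i"
            unfolding G_def H_def using finS chp
            by (intro CK_sum[OF jL, symmetric]) (auto simp: Si_def)
          finally show "(\<Sum>x\<in>Si i. c x *\<^sub>R (case x of (J, v) \<Rightarrow> chain \<mu> E n J v L)) = (xvec E L ^^ i) (G i)" .
        qed
        finally show ?thesis .
      qed
      have G0: "\<forall>i\<le>d. G i = 0"
      proof (rule fischer_direct[of L d "\<lambda>i. d - i" G])
        show "1 \<le> L" "L \<le> n" using L2 Ln by auto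
        show "(\<Sum>i\<le>d. (xvec E L ^^ i) (G i)) = 0" using Z E1 by simp
        show "\<forall>i\<le>d. sat (\<lambda>\<beta>. dsum {1..L} \<beta> = d - i) (G i) \<and> dirac \<mu> E L (G i) = 0"
        proof (intro allI impI conjI)
          fix i
          have dL: "sat (\<lambda>\<beta>. dsum {1..L} \<beta> = d - i) (H i)"
          proof -
            have "sat (\<lambda>\<beta>. dsum {1..l} \<beta> = d - i \<and> suppin {1..l} \<beta>) (H i)"
              using degH suppH by (intro sat_conj)
            then show ?thesis by (rule sat_mono) (auto simp: dsum_def L_def suppin_def)
          qed
          show "sat (\<lambda>\<beta>. dsum {1..L} \<beta> = d - i) (G i)" unfolding G_def CK_CKd
            using jL Ln dL by (intro sat_CKd sat_FF_deg) auto
          show "dirac \<mu> E L (G i) = 0" unfolding G_def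
            using L2 Ln finH suppH by (intro CK_mono) (auto simp: L_def)
        qed
      qed
      have H0: "H i = 0" if "i \<le> d" for i
      proof
        fix \<beta> :: "nat \<Rightarrow> nat"
        show "H i \<beta> = 0 \<beta>"
        proof (cases "\<beta> L = 0")
          case True
          then have "H i \<beta> = G i \<beta>" unfolding G_def using jL by (simp add: CK_restrict)
          then show ?thesis using G0 that by simp
        next
          case False
          then show ?thesis using suppH[of i] by (auto simp: sat_def suppin_def L_def)
        qed
      qed
      have cz: "c (J'(L := i), v) = 0" if "i \<le> d" "J' \<in> AA l (d - i)" "v \<in> B" for i J' v
      proof -
        define \<phi> where "\<phi> y = ((fst y)(L := i), snd y)" for y :: "(nat \<Rightarrow> nat) \<times> 'v"
        have inj: "inj_on \<phi> (AA l (d - i) \<times> B)"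
        proof (rule inj_onI)
          fix y z assume y: "y \<in> AA l (d - i) \<times> B" and z: "z \<in> AA l (d - i) \<times> B" and e: "\<phi> y = \<phi> z"
          have "fst y L = 0" "fst z L = 0" using y z AA_out unfolding L_def by (auto simp: mem_Times_iff)
          then have "fst y = fst z" using e unfolding \<phi>_def by (metis fun_upd_triv fst_conv fun_upd_upd)
          moreover have "snd y = snd z" using e unfolding \<phi>_def by simp
          ultimately show "y = z" by (simp add: prod_eq_iff)
        qed
        have img: "\<phi> ` (AA l (d - i) \<times> B) = Si i"
        proof
          show "\<phi> ` (AA l (d - i) \<times> B) \<subseteq> Si i"
            using that(1) AA_join[of _ l "d - i" i d] unfolding \<phi>_def Si_def S_def L_def by auto
          show "Si i \<subseteq> \<phi> ` (AA l (d - i) \<times> B)"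
          proof
            fix x assume x: "x \<in> Si i"
            then have xs: "x \<in> S" and xi: "fst x L = i" by (auto simp: Si_def)
            have "\<phi> ((fst x)(L := 0), snd x) = x" unfolding \<phi>_def using xi by (auto simp: prod_eq_iff)
            moreover have "((fst x)(L := 0), snd x) \<in> AA l (d - i) \<times> B"
              using xS(2)[OF xs] xi xs by (auto simp: S_def mem_Times_iff)
            ultimately show "x \<in> \<phi> ` (AA l (d - i) \<times> B)" by (metis image_eqI)
          qed
        qed
        have chphi: "ch (\<phi> y) = chain \<mu> E n (fst y) (snd y) l" for y
          unfolding ch_def \<phi>_def by (simp, intro chain_local) (auto simp: L_def)
        have "(\<Sum>y\<in>AA l (d - i) \<times> B. c (\<phi> y) *\<^sub>R (case y of (J, v) \<Rightarrow> chain \<mu> E n J v l)) = H i"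
          unfolding H_def img[symmetric] sum.reindex[OF inj]
          by (intro sum.cong refl) (simp add: chphi case_prod_beta)
        also have "\<dots> = 0" using H0[OF that(1)] .
        finally have Z2: "(\<Sum>y\<in>AA l (d - i) \<times> B. c (\<phi> y) *\<^sub>R (case y of (J, v) \<Rightarrow> chain \<mu> E n J v l)) = 0" .
        have I2: "\<forall>c. (\<Sum>x\<in>AA l (d - i) \<times> B. c x *\<^sub>R (case x of (J, v) \<Rightarrow> chain \<mu> E n J v l)) = 0
             \<longrightarrow> (\<forall>x\<in>AA l (d - i) \<times> B. c x = 0)"
          using IH[of "d - i"] unfolding indep_fam_def by (rule conjunct2)
        have "\<forall>y\<in>AA l (d - i) \<times> B. c (\<phi> y) = 0"
          using spec[OF I2, of "\<lambda>y. c (\<phi> y)"] Z2 by (rule mp)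
        then show ?thesis using that(2,3) unfolding \<phi>_def by force
      qed
      show "\<forall>x\<in>S. c x = 0"
      proof
        fix x assume xs: "x \<in> S"
        have sB: "snd x \<in> B" using xs by (auto simp: S_def mem_Times_iff)
        have "c (((fst x)(L := 0))(L := fst x L), snd x) = 0"
          by (rule cz[OF xS(1)[OF xs] xS(2)[OF xs] sB])
        then show "c x = 0" by simp
      qed
    qed
  qed
qed

end


lemma indep_famD: "indep_fam F I \<Longrightarrow> (\<Sum>x\<in>I. c x *\<^sub>R F x) = 0 \<Longrightarrow> x \<in> I \<Longrightarrow> c x = 0"
  unfolding indep_fam_def by blast

lemma indep_inj:
  assumes "indep_fam F I" shows "inj_on F I"
proof (rule inj_onI, rule ccontr)
  fix x y assume x: "x \<in> I" and y: "y \<in> I" and e: "F x = F y" and ne: "x \<noteq> y"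
  have fI: "finite I" using assms by (simp add: indep_fam_def)
  define c where "c z = (if z = x then 1 else if z = y then -1 else (0::real))" for z
  have "(\<Sum>z\<in>I. c z *\<^sub>R F z) = (\<Sum>z\<in>{x, y}. c z *\<^sub>R F z)"
    using x y fI by (intro sum.mono_neutral_right) (auto simp: c_def)
  also have "\<dots> = F x - F y" using ne by (simp add: c_def)
  also have "\<dots> = 0" using e by simp
  finally have "c x = 0" using indep_famD[OF assms _ x] by blast
  then show False by (simp add: c_def)
qed

lemma indep_image:
  assumes "indep_fam F I" shows "independent (F ` I)"
proof (rule real_vector.independent_if_scalars_zero)
  have fI: "finite I" using assms by (simp add: indep_fam_def)
  then show "finite (F ` I)" by simp
  fix f a assume Z: "(\<Sum>x\<in>F ` I. f x *\<^sub>R x) = 0" and a: "a \<in> F ` I"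
  have "(\<Sum>z\<in>I. f (F z) *\<^sub>R F z) = 0" using Z sum.reindex[OF indep_inj[OF assms], of "\<lambda>x. f x *\<^sub>R x"] by simp
  then have "\<forall>z\<in>I. f (F z) = 0" using indep_famD[OF assms, of "\<lambda>z. f (F z)"] by blast
  then show "f a = 0" using a by auto
qed

lemma indep_bij:
  assumes b: "bij_betw h I J" and ind: "indep_fam F J"
  shows "indep_fam (\<lambda>x. F (h x)) I"
  unfolding indep_fam_def
proof (intro conjI allI impI ballI)
  have "finite J" using ind by (simp add: indep_fam_def)
  then show fI: "finite I" using b bij_betw_finite by blast
  fix c x assume Z: "(\<Sum>x\<in>I. c x *\<^sub>R F (h x)) = 0" and x: "x \<in> I"
  define c' where "c' y = c (inv_into I h y)" for y
  have "(\<Sum>y\<in>J. c' y *\<^sub>R F y) = (\<Sum>x\<in>I. c' (h x) *\<^sub>R F (h x))"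
    by (rule sum.reindex_bij_betw[OF b, symmetric])
  also have "\<dots> = (\<Sum>x\<in>I. c x *\<^sub>R F (h x))"
    by (intro sum.cong refl) (simp add: c'_def bij_betw_inv_into_left[OF b])
  finally have "(\<Sum>y\<in>J. c' y *\<^sub>R F y) = 0" using Z by simp
  then have "\<forall>y\<in>J. c' y = 0" using indep_famD[OF ind, of c'] by blast
  moreover have "h x \<in> J" using b x by (auto simp: bij_betw_def)
  ultimately show "c x = 0" using bij_betw_inv_into_left[OF b x] by (auto simp: c'_def)
qed

lemma span_by_count:
  assumes fT: "finite T" and PT: "P \<subseteq> span T" and SP: "S \<subseteq> P" and iS: "independent S"
    and cT: "card T \<le> card S"
  shows "P \<subseteq> span S"
proof
  fix p assume p: "p \<in> P"
  show "p \<in> span S"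
  proof (rule ccontr)
    assume np: "p \<notin> span S"
    have pS: "p \<notin> S"
    proof
      assume "p \<in> S" then have "p \<in> span S" by (rule real_vector.span_base)
      with np show False by simp
    qed
    have ind: "independent (insert p S)" using iS np pS real_vector.independent_insert[of p S] by simp
    have sub: "insert p S \<subseteq> span T" using p SP PT by auto
    have "finite (insert p S) \<and> card (insert p S) \<le> card T"
      by (rule real_vector.independent_span_bound[OF fT ind sub])
    then have fS: "finite S" and c: "card (insert p S) \<le> card T" by auto
    have "card (insert p S) = Suc (card S)" using fS pS by simp
    then show False using c cT by linarith
  qed
qed



lemma sum_split_last:
  assumes "(n::nat) \<ge> 3" shows "(\<Sum>i=1..n-1. f i) = (\<Sum>i=1..n-2. f i) + (f (n-1) :: nat)"
proof -
  have e: "n - 1 = Suc (n - 2)" using assms by simp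
  show ?thesis unfolding e using assms by simp
qed

lemma phi_bij:
  assumes n3: "n \<ge> 3"
  shows "bij_betw (\<lambda>jj. jj(n-1 := k - (\<Sum>i=1..n-2. jj i))) (mindex n k) (AA (n-1) k)"
proof (rule bij_betw_byWitness[where f'="\<lambda>\<alpha>. \<alpha>(n-1 := 0)"])
  have nn: "n - 1 \<notin> {1..n-2}" using n3 by auto
  have sc: "(\<Sum>i=1..n-2. (jj(n-1 := x)) i) = (\<Sum>i=1..n-2. jj i)" for jj :: "nat \<Rightarrow> nat" and x
    using nn by (intro sum.cong) auto
  show "\<forall>a\<in>mindex n k. (a(n-1 := k - (\<Sum>i=1..n-2. a i)))(n-1 := 0) = a"
  proof
    fix a assume "a \<in> mindex n k"
    then have "a (n-1) = 0" using nn by (simp add: mindex_def)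
    then show "(a(n-1 := k - (\<Sum>i=1..n-2. a i)))(n-1 := 0) = a" by (auto simp: fun_eq_iff)
  qed
  show "\<forall>a'\<in>AA (n-1) k. (a'(n-1 := 0))(n-1 := k - (\<Sum>i=1..n-2. (a'(n-1 := 0)) i)) = a'"
  proof
    fix a assume a: "a \<in> AA (n-1) k"
    have "(\<Sum>i=1..n-1. a i) = k" using a by (simp add: AA_def)
    then have "a (n-1) = k - (\<Sum>i=1..n-2. a i)" using sum_split_last[OF n3, of a] by simp
    then show "(a(n-1 := 0))(n-1 := k - (\<Sum>i=1..n-2. (a(n-1 := 0)) i)) = a"
      unfolding sc by (auto simp: fun_eq_iff)
  qed
  show "(\<lambda>jj. jj(n-1 := k - (\<Sum>i=1..n-2. jj i))) ` mindex n k \<subseteq> AA (n-1) k"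
  proof
    fix b assume "b \<in> (\<lambda>jj. jj(n-1 := k - (\<Sum>i=1..n-2. jj i))) ` mindex n k"
    then obtain a where a: "a \<in> mindex n k" and b: "b = a(n-1 := k - (\<Sum>i=1..n-2. a i))" by auto
    have out: "\<forall>i. i \<notin> {1..n-1} \<longrightarrow> b i = 0" using a n3 unfolding b by (auto simp: mindex_def)
    have "(\<Sum>i=1..n-1. b i) = (\<Sum>i=1..n-2. b i) + b (n-1)" by (rule sum_split_last[OF n3])
    also have "\<dots> = k" unfolding b sc using a by (simp add: mindex_def)
    finally show "b \<in> AA (n-1) k" using out by (simp add: AA_def)
  qed
  show "(\<lambda>\<alpha>. \<alpha>(n-1 := 0)) ` AA (n-1) k \<subseteq> mindex n k"
  proof
    fix b assume "b \<in> (\<lambda>\<alpha>. \<alpha>(n-1 := 0)) ` AA (n-1) k"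
    then obtain a where a: "a \<in> AA (n-1) k" and b: "b = a(n-1 := 0)" by auto
    have "\<forall>i. i \<notin> {1..n-2} \<longrightarrow> b i = 0" using a n3 unfolding b AA_def by auto
    moreover have "(\<Sum>i=1..n-2. b i) \<le> k"
    proof -
      have "(\<Sum>i=1..n-1. a i) = k" using a by (simp add: AA_def)
      then show ?thesis unfolding b sc using sum_split_last[OF n3, of a] by simp
    qed
    ultimately show "b \<in> mindex n k" by (simp add: mindex_def)
  qed
qed

lemma Phi_bij:
  assumes "bij_betw \<phi> X Y"
  shows "bij_betw (\<lambda>x. (\<phi> (fst x), snd x)) (X \<times> B) (Y \<times> B)"
proof -
  have e: "(\<lambda>x. (\<phi> (fst x), snd x)) = map_prod \<phi> id" by (auto simp: fun_eq_iff)
  show ?thesis unfolding e by (rule bij_betw_map_prod[OF assms bij_betw_id])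
qed

lemma mono_sum: "mono \<alpha> (\<Sum>b\<in>B. u b *\<^sub>R b) = (\<Sum>b\<in>B. u b *\<^sub>R mono \<alpha> (b::'v::real_vector))"
  by (rule ext) (auto simp: mono_def sum_fun_apply)



lemma monogenic_iff: "p \<in> monogenic \<mu> E n k \<longleftrightarrow> homog n k p \<and> dirac \<mu> E n p = 0"
  by (simp add: monogenic_def zero_fun_def)

theorem proposition6:
  fixes n k :: nat and \<mu> :: "nat \<Rightarrow> real" and E :: "nat \<Rightarrow> 'v::real_vector \<Rightarrow> 'v"
    and B :: "'v set"
  assumes n3: "n \<ge> 3"
    and mu_pos: "\<forall>i\<in>{1..n}. \<mu> i > 0"
    and clif: "clifford_module n E"
    and finB: "finite B"
    and indepB: "independent B"
    and spanB: "span B = UNIV"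
  shows "is_basis_fam (monogenic \<mu> E n k) (\<lambda>(jj, v). Psi \<mu> E n k jj v) (mindex n k \<times> B)"
proof -
  interpret dk n \<mu> E using mu_pos clif by unfold_locales
  define A0 where "A0 = AA (n-1) k"
  define I where "I = mindex n k \<times> B"
  define \<phi> where "\<phi> jj = jj(n-1 := k - (\<Sum>i=1..n-2. jj i))" for jj :: "nat \<Rightarrow> nat"
  define \<Phi> where "\<Phi> x = (\<phi> (fst x), snd x)" for x :: "(nat \<Rightarrow> nat) \<times> 'v"
  define G where "G y = chain \<mu> E n (fst y) (snd y) (n-1)" for y :: "(nat \<Rightarrow> nat) \<times> 'v"
  define F where "F = (\<lambda>(jj, v). Psi \<mu> E n k jj v)"
  have n1: "1 \<le> n-1" "n-1 \<le> n" "2 \<le> n" using n3 by auto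
  have jn: "n \<in> {1..n}" using n3 by auto
  have FG: "F x = CK \<mu> E n n (G (\<Phi> x))" for x
    unfolding F_def G_def \<Phi>_def \<phi>_def by (simp add: Psi_def case_prod_beta)
  have b\<Phi>: "bij_betw \<Phi> I (A0 \<times> B)"
    unfolding \<Phi>_def[abs_def] I_def A0_def \<phi>_def[abs_def] by (intro Phi_bij phi_bij n3)
  have finA0B: "finite (A0 \<times> B)" unfolding A0_def using AA_finite finB by simp
  have finI: "finite I" using b\<Phi> finA0B bij_betw_finite by blast
  have Geq: "G = (\<lambda>(J, v). chain \<mu> E n J v (n-1))" unfolding G_def by (auto simp: fun_eq_iff)
  have indG: "indep_fam G (A0 \<times> B)"
    unfolding Geq A0_def by (rule chain_indep[OF indepB finB n1(1,2)])
  have indGP: "indep_fam (\<lambda>x. G (\<Phi> x)) I" by (rule indep_bij[OF b\<Phi> indG])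
  have Gp: "fin (G y) \<and> sat (suppin {1..n-1}) (G y) \<and> sat (\<lambda>\<beta>. dsum {1..n-1} \<beta> = k) (G y)"
    if "y \<in> A0 \<times> B" for y
    using chain_props[OF n1(1,2), of "fst y" "snd y"] that unfolding G_def A0_def AA_def
    by (auto simp: mem_Times_iff)
  have \<Phi>in: "\<Phi> x \<in> A0 \<times> B" if "x \<in> I" for x using b\<Phi> that by (auto simp: bij_betw_def)
  have CKgood: "CK \<mu> E n n p \<in> monogenic \<mu> E n k"
    if f: "fin p" and s: "sat (suppin {1..n-1}) p" and d: "sat (\<lambda>\<beta>. dsum {1..n-1} \<beta> = k) p" for p
  proof -
    have sn: "sat (suppin {1..n}) p" using s by (rule sat_mono) (auto simp: suppin_def)
    have dn: "sat (\<lambda>\<beta>. dsum {1..n} \<beta> = k) p"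
    proof -
      have "sat (\<lambda>\<beta>. dsum {1..n-1} \<beta> = k \<and> suppin {1..n-1} \<beta>) p" using d s by (rule sat_conj)
      then show ?thesis
      proof (rule sat_mono)
        fix \<beta> assume h: "dsum {1..n-1} \<beta> = k \<and> suppin {1..n-1} \<beta>"
        have e: "{1..n} = insert n {1..n-1}" using n3 by auto
        have "\<beta> n = 0" using h n3 by (auto simp: suppin_def)
        have nn: "n \<notin> {1..n-1}" by auto
        then show "dsum {1..n} \<beta> = k" using h \<open>\<beta> n = 0\<close> unfolding dsum_def e
          by (simp add: sum.insert[OF finite_atLeastAtMost nn])
      qed
    qed
    have C: "CK \<mu> E n n p = CKd \<mu> E n (tdeg n p) p" by (rule CK_CKd)
    have "fin (CK \<mu> E n n p)" unfolding C using jn f by (rule fin_CKd)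
    moreover have "sat (suppin {1..n}) (CK \<mu> E n n p)" unfolding C
      using jn sn by (intro sat_CKd sat_FF_supp) auto
    moreover have "sat (\<lambda>\<beta>. dsum {1..n} \<beta> = k) (CK \<mu> E n n p)" unfolding C
      using jn dn by (intro sat_CKd sat_FF_deg) auto
    moreover have "dirac \<mu> E n (CK \<mu> E n n p) = 0"
      using n1 f s by (intro CK_mono) auto
    ultimately show ?thesis by (simp add: monogenic_iff homog_iff)
  qed
  have indF: "indep_fam F I"
    unfolding indep_fam_def
  proof (intro conjI allI impI ballI)
    show "finite I" by (rule finI)
    fix c x assume Z: "(\<Sum>x\<in>I. c x *\<^sub>R F x) = 0" and x: "x \<in> I"
    define q where "q = (\<Sum>x\<in>I. c x *\<^sub>R G (\<Phi> x))"
    have "(\<Sum>x\<in>I. c x *\<^sub>R F x) = CK \<mu> E n n q"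
      unfolding FG q_def using finI Gp \<Phi>in by (intro CK_sum[OF jn, symmetric]) auto
    then have CKq: "CK \<mu> E n n q = 0" using Z by simp
    have sq: "sat (suppin {1..n-1}) q" unfolding q_def using Gp \<Phi>in by (intro sat_sum sat_scale) auto
    have "q = 0"
    proof
      fix \<beta> :: "nat \<Rightarrow> nat"
      show "q \<beta> = 0 \<beta>"
      proof (cases "\<beta> n = 0")
        case True
        then have "q \<beta> = CK \<mu> E n n q \<beta>" using jn by (simp add: CK_restrict)
        then show ?thesis using CKq by simp
      next
        case False
        then show ?thesis using sq n3 by (auto simp: sat_def suppin_def)
      qed
    qed
    then show "c x = 0" using indep_famD[OF indGP _ x, of c] unfolding q_def by simp
  qed
  have injF: "inj_on F I" by (rule indep_inj[OF indF])
  have iF: "independent (F ` I)" by (rule indep_image[OF indF])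
  have subM: "subspace (monogenic \<mu> E n k)"
    unfolding real_vector.subspace_def
    using linear_dirac[OF order.refl]
    by (auto intro: fin_add fin_scale sat_add sat_scale simp: linear_add linear_scale linear_0 monogenic_iff homog_iff)
  have FM: "F ` I \<subseteq> monogenic \<mu> E n k"
  proof
    fix y assume "y \<in> F ` I"
    then obtain x where x: "x \<in> I" and y: "y = F x" by auto
    show "y \<in> monogenic \<mu> E n k" unfolding y FG using Gp[OF \<Phi>in[OF x]] CKgood by blast
  qed
  have span1: "span (F ` I) \<subseteq> monogenic \<mu> E n k"
    by (rule real_vector.span_minimal[OF FM subM])
  define P where "P = {p :: 'v vpoly. fin p \<and> sat (suppin {1..n-1}) p \<and> sat (\<lambda>\<beta>. dsum {1..n-1} \<beta> = k) p}"
  define T where "T = (\<lambda>(\<alpha>, b). mono \<alpha> b) ` (A0 \<times> B)"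
  have finT: "finite T" unfolding T_def using finA0B by simp
  have PT: "P \<subseteq> span T"
  proof
    fix p assume p: "p \<in> P"
    have inA: "\<beta> \<in> A0" if "p \<beta> \<noteq> 0" for \<beta>
      using p that unfolding P_def A0_def AA_def sat_def suppin_def dsum_def by auto
    have pe: "p = (\<Sum>\<alpha>\<in>A0. mono \<alpha> (p \<alpha>))"
    proof
      fix \<beta> :: "nat \<Rightarrow> nat"
      have "(\<Sum>\<alpha>\<in>A0. mono \<alpha> (p \<alpha>)) \<beta> = (\<Sum>\<alpha>\<in>A0. if \<beta> = \<alpha> then p \<alpha> else 0)"
        unfolding sum_fun_apply by (simp add: mono_def)
      also have "\<dots> = (if \<beta> \<in> A0 then p \<beta> else 0)"
        using AA_finite unfolding A0_def by (simp add: sum.delta)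
      also have "\<dots> = p \<beta>" using inA by auto
      finally show "p \<beta> = (\<Sum>\<alpha>\<in>A0. mono \<alpha> (p \<alpha>)) \<beta>" by simp
    qed
    have "mono \<alpha> (p \<alpha>) \<in> span T" if a: "\<alpha> \<in> A0" for \<alpha>
    proof -
      have "p \<alpha> \<in> span B" using spanB by simp
      then obtain u where u: "p \<alpha> = (\<Sum>b\<in>B. u b *\<^sub>R b)"
        unfolding real_vector.span_finite[OF finB] by auto
      have "mono \<alpha> b \<in> span T" if "b \<in> B" for b
        using a that unfolding T_def by (intro real_vector.span_base) auto
      then show ?thesis unfolding u mono_sum
        by (intro real_vector.span_sum real_vector.span_scale) auto
    qed
    then show "p \<in> span T" by (subst pe) (intro real_vector.span_sum)
  qed
  have injG: "inj_on G (A0 \<times> B)" by (rule indep_inj[OF indG])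
  have PS: "P \<subseteq> span (G ` (A0 \<times> B))"
  proof (rule span_by_count[OF finT PT])
    show "G ` (A0 \<times> B) \<subseteq> P" using Gp unfolding P_def by auto
    show "independent (G ` (A0 \<times> B))" by (rule indep_image[OF indG])
    have "card T \<le> card (A0 \<times> B)" unfolding T_def by (rule card_image_le[OF finA0B])
    also have "\<dots> = card (G ` (A0 \<times> B))" using card_image[OF injG] by simp
    finally show "card T \<le> card (G ` (A0 \<times> B))" .
  qed
  have span2: "monogenic \<mu> E n k \<subseteq> span (F ` I)"
  proof
    fix f assume fM: "f \<in> monogenic \<mu> E n k"
    then have ff: "fin f" and fs: "sat (suppin {1..n}) f" and fd: "sat (\<lambda>\<beta>. dsum {1..n} \<beta> = k) f"
      and fD: "dirac \<mu> E n f = 0"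
      by (auto simp: monogenic_iff homog_iff)
    define g where "g \<beta> = (if \<beta> n = 0 then f \<beta> else 0)" for \<beta>
    have gf: "fin g" using ff unfolding fin_def g_def by (rule finite_subset[rotated]) auto
    have gs: "sat (suppin {1..n-1}) g"
      unfolding sat_def suppin_def
    proof (intro allI impI)
      fix \<beta> :: "nat \<Rightarrow> nat" and i assume gb: "g \<beta> \<noteq> 0" and i: "i \<notin> {1..n-1}"
      then have b0: "\<beta> n = 0" and fb: "f \<beta> \<noteq> 0" by (auto simp: g_def split: if_splits)
      show "\<beta> i = 0"
      proof (cases "i = n")
        case True then show ?thesis using b0 by simp
      next
        case False
        then have "i \<notin> {1..n}" using i by auto
        then show ?thesis using fs fb unfolding sat_def suppin_def by blast
      qed
    qed
    have gd: "sat (\<lambda>\<beta>. dsum {1..n-1} \<beta> = k) g"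
      unfolding sat_def
    proof (intro allI impI)
      fix \<beta> assume "g \<beta> \<noteq> 0"
      then have b0: "\<beta> n = 0" and fb: "f \<beta> \<noteq> 0" by (auto simp: g_def split: if_splits)
      have e: "{1..n} = insert n {1..n-1}" using n3 by auto
      have "dsum {1..n} \<beta> = k" using fd fb by (auto simp: sat_def)
      have nn: "n \<notin> {1..n-1}" by auto
      then show "dsum {1..n-1} \<beta> = k" using b0 \<open>dsum {1..n} \<beta> = k\<close> unfolding dsum_def e
        by (simp add: sum.insert[OF finite_atLeastAtMost nn])
    qed
    have "g \<in> span (G ` (A0 \<times> B))" using PS gf gs gd unfolding P_def by auto
    then obtain u where u: "g = (\<Sum>s\<in>G ` (A0 \<times> B). u s *\<^sub>R s)"
      unfolding real_vector.span_finite[OF finite_imageI[OF finA0B]] by auto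
    have g2: "g = (\<Sum>y\<in>A0 \<times> B. u (G y) *\<^sub>R G y)"
      unfolding u by (subst sum.reindex[OF injG]) simp
    have CKg: "CK \<mu> E n n g = (\<Sum>y\<in>A0 \<times> B. u (G y) *\<^sub>R CK \<mu> E n n (G y))"
      unfolding g2 using finA0B Gp by (intro CK_sum[OF jn]) auto
    have inF: "CK \<mu> E n n (G y) \<in> F ` I" if y: "y \<in> A0 \<times> B" for y
    proof -
      define x where "x = inv_into I \<Phi> y"
      have xI: "x \<in> I" unfolding x_def using b\<Phi> y by (metis bij_betw_def inv_into_into)
      have "\<Phi> x = y" unfolding x_def using b\<Phi> y by (metis bij_betw_inv_into_right)
      then have "F x = CK \<mu> E n n (G y)" by (simp add: FG)
      then show ?thesis using xI by (metis image_eqI)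
    qed
    have CKs: "CK \<mu> E n n g \<in> span (F ` I)"
      unfolding CKg using inF
      by (intro real_vector.span_sum real_vector.span_scale real_vector.span_base) auto
    have "f - CK \<mu> E n n g = 0"
    proof (rule mono_unique)
      show "1 \<le> n" "n \<le> n" using n3 by auto
      have "dirac \<mu> E n (CK \<mu> E n n g) = 0" using n1 gf gs by (intro CK_mono) auto
      then show "dirac \<mu> E n (f - CK \<mu> E n n g) = 0"
        using fD linear_diff[OF linear_dirac[OF order.refl]] by simp
      fix \<beta> :: "nat \<Rightarrow> nat" assume b: "\<beta> n = 0"
      have "CK \<mu> E n n g \<beta> = g \<beta>" using jn b by (rule CK_restrict)
      then show "(f - CK \<mu> E n n g) \<beta> = 0" using b by (simp add: g_def)
    qed
    then have "f = CK \<mu> E n n g" by simp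
    then show "f \<in> span (F ` I)" using CKs by simp
  qed
  have "module.span pscale (F ` I) = monogenic \<mu> E n k"
    unfolding pscale_eq span_raw_def[symmetric] using span1 span2 by auto
  moreover have "\<not> module.dependent pscale (F ` I)"
    unfolding pscale_eq dependent_raw_def[symmetric] using iF .
  ultimately show ?thesis using injF unfolding is_basis_fam_def F_def I_def by simp
qed



end
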